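(* There is a polynomial-time algorithm that, given two Horn formulae $F_1$ and $F_2$, decides whether the lexicographic orders $[F_1,F_2]$ and $[F_1]$ are equivalent.
   Context: A Horn formula is a CNF formula (a set of clauses) in which every clause contains at most one positive literal. Models are truth assignments. For a formula $F$: $I \leq_F J$ iff $I \models F$ or $J \not\models F$. For a sequence $S=[S_1,\ldots,S_m]$: $I \leq_S J$ iff either $S=[]$, or ($I \leq_{S_1} J$ and (either $J \not\leq_{S_1} I$ or $I \leq_R J$)), where $R=[S_2,\ldots,S_m]$. Two sequences $S$ and $R$ are equivalent if $I \leq_S J$ and $I\leq_R J$ coincide for all pairs of models $I,J$. *)

theory Defs
  imports Main
begin

text \<open>Variables are natural numbers; a literal is a pair (variable, polarity),
  True meaning positive.\<close>

type_synonym literal = "nat \<times> bool"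
type_synonym clause = "literal list"
type_synonym formula = "clause list"
type_synonym model = "nat \<Rightarrow> bool"

definition lit_sat :: "model \<Rightarrow> literal \<Rightarrow> bool" where
  "lit_sat I l = (I (fst l) = snd l)"

definition clause_sat :: "model \<Rightarrow> clause \<Rightarrow> bool" where
  "clause_sat I c = (\<exists>l\<in>set c. lit_sat I l)"

definition models :: "model \<Rightarrow> formula \<Rightarrow> bool" where
  "models I F = (\<forall>c\<in>set F. clause_sat I c)"

definition horn_clause :: "clause \<Rightarrow> bool" where
  "horn_clause c = (card {v. (v, True) \<in> set c} \<le> 1)"

definition horn :: "formula \<Rightarrow> bool" where
  "horn F = (\<forall>c\<in>set F. horn_clause c)"

definition leq_form :: "formula \<Rightarrow> model \<Rightarrow> model \<Rightarrow> bool" where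
  "leq_form F I J = (models I F \<or> \<not> models J F)"

fun leq_seq :: "formula list \<Rightarrow> model \<Rightarrow> model \<Rightarrow> bool" where
  "leq_seq [] I J = True"
| "leq_seq (F # R) I J =
     (leq_form F I J \<and> (\<not> leq_form F J I \<or> leq_seq R I J))"

definition seq_equiv :: "formula list \<Rightarrow> formula list \<Rightarrow> bool" where
  "seq_equiv S R = (\<forall>I J. leq_seq S I J = leq_seq R I J)"

text \<open>Tape symbols are natural numbers, 0 being the blank. A machine is
  (number of states, number of symbols, transition function). State 0 is the
  start state, state 1 is the accepting and state 2 the rejecting halting state.\<close>

datatype dir = Lft | Rgt | Stay

type_synonym tm = "nat \<times> nat \<times> (nat \<Rightarrow> nat \<Rightarrow> nat \<times> nat \<times> dir)"

definition wf_tm :: "tm \<Rightarrow> bool" where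
  "wf_tm M = (case M of (nQ, nS, \<delta>) \<Rightarrow>
     3 \<le> nQ \<and> 7 \<le> nS \<and>
     (\<forall>q<nQ. \<forall>s<nS. fst (\<delta> q s) < nQ \<and> fst (snd (\<delta> q s)) < nS))"

text \<open>Configuration: (state, left part of tape reversed, head symbol, right part).\<close>
type_synonym config = "nat \<times> nat list \<times> nat \<times> nat list"

fun move :: "dir \<Rightarrow> nat list \<Rightarrow> nat \<Rightarrow> nat list \<Rightarrow> nat list \<times> nat \<times> nat list" where
  "move Stay ls s rs = (ls, s, rs)"
| "move Lft [] s rs = ([], 0, s # rs)"
| "move Lft (x # ls) s rs = (ls, x, s # rs)"
| "move Rgt ls s [] = (s # ls, 0, [])"
| "move Rgt ls s (x # rs) = (s # ls, x, rs)"

fun tm_step :: "tm \<Rightarrow> config \<Rightarrow> config" where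
  "tm_step (nQ, nS, \<delta>) (q, ls, h, rs) =
     (if q = 1 \<or> q = 2 then (q, ls, h, rs)
      else (case \<delta> q h of (q', s', d) \<Rightarrow> (q', move d ls s' rs)))"

definition tm_run :: "tm \<Rightarrow> nat \<Rightarrow> config \<Rightarrow> config" where
  "tm_run M n c = (tm_step M ^^ n) c"

definition tm_init :: "nat list \<Rightarrow> config" where
  "tm_init w = (case w of [] \<Rightarrow> (0, [], 0, []) | x # xs \<Rightarrow> (0, [], x, xs))"

definition tm_state :: "config \<Rightarrow> nat" where
  "tm_state c = fst c"

text \<open>Symbols: 1 = bit 0, 2 = bit 1, 3 = positive literal marker,
  4 = negative literal marker, 5 = end of clause, 6 = end of formula.
  Variable indices are written in binary (least significant bit first).\<close>

fun bits :: "nat \<Rightarrow> nat list" where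
  "bits n = (if n = 0 then [] else (if even n then 1 else 2) # bits (n div 2))"

definition enc_lit :: "literal \<Rightarrow> nat list" where
  "enc_lit l = (if snd l then 3 else 4) # bits (fst l)"

definition enc_clause :: "clause \<Rightarrow> nat list" where
  "enc_clause c = concat (map enc_lit c) @ [5]"

definition enc_formula :: "formula \<Rightarrow> nat list" where
  "enc_formula F = concat (map enc_clause F) @ [6]"

definition enc_pair :: "formula \<Rightarrow> formula \<Rightarrow> nat list" where
  "enc_pair F1 F2 = enc_formula F1 @ enc_formula F2"

end

theory Submission
  imports Defs "HOL-Library.Countable"
begin

datatype cell = Cell (cb: nat) (cT: bool) (cC: bool) (cK: bool) (cSel: bool) (cS: "bool option")

definition smode_nat :: "bool option \<Rightarrow> nat" where
  "smode_nat s = (case s of None \<Rightarrow> 0 | Some False \<Rightarrow> 1 | Some True \<Rightarrow> 2)"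

definition enc_cell :: "cell \<Rightarrow> nat" where
  "enc_cell x = cb x + 8 * (of_bool (cT x) + 2 * (of_bool (cC x) + 2 * (of_bool (cK x)
      + 2 * (of_bool (cSel x) + 2 * smode_nat (cS x)))))"

definition dec_cell :: "nat \<Rightarrow> cell" where
  "dec_cell n = (let m = n div 8 in Cell (n mod 8) (odd m) (odd (m div 2)) (odd (m div 2 div 2))
     (odd (m div 2 div 2 div 2))
     (case m div 2 div 2 div 2 div 2 of 0 \<Rightarrow> None | Suc 0 \<Rightarrow> Some False | _ \<Rightarrow> Some True))"

lemma dm8: "(b::nat) < 8 \<Longrightarrow> (b + 8 * m) div 8 = m \<and> (b + 8 * m) mod 8 = b" by simp
lemma odd_ob: "odd (of_bool t + 2 * (r::nat)) = t" by (cases t) auto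
lemma div_ob: "(of_bool t + 2 * (r::nat)) div 2 = r" by (cases t) auto

lemma dec_enc_cell: "cb x < 8 \<Longrightarrow> dec_cell (enc_cell x) = x"
proof (cases x)
  case (Cell b t c k sel s)
  assume "cb x < 8"
  then have b: "b < 8" using Cell by simp
  let ?m = "of_bool t + 2 * (of_bool c + 2 * (of_bool k + 2 * (of_bool sel + 2 * smode_nat s))) :: nat"
  have d: "(b + 8 * ?m) div 8 = ?m" "(b + 8 * ?m) mod 8 = b" using dm8[OF b] by blast+
  have s: "(case smode_nat s of 0 \<Rightarrow> None | Suc 0 \<Rightarrow> Some False | _ \<Rightarrow> Some True) = s"
    by (cases s) (auto simp: smode_nat_def split: bool.split)
  show ?thesis unfolding Cell enc_cell_def dec_cell_def cell.sel Let_def d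
    by (simp only: odd_ob div_ob s)
qed

lemma enc_cell_lt: "cb x < 8 \<Longrightarrow> enc_cell x < 384"
proof -
  assume "cb x < 8"
  moreover have "smode_nat (cS x) \<le> 2" by (auto simp: smode_nat_def split: option.split bool.split)
  ultimately show ?thesis unfolding enc_cell_def by (cases "cT x"; cases "cC x"; cases "cK x"; cases "cSel x"; simp)
qed

lemma enc_cell_pos: "0 < cb x \<Longrightarrow> 0 < enc_cell x"
  unfolding enc_cell_def by simp

fun sweep :: "('s \<Rightarrow> cell \<Rightarrow> 's \<times> cell) \<Rightarrow> 's \<Rightarrow> cell list \<Rightarrow> 's \<times> cell list" where
  "sweep d s [] = (s, [])"
| "sweep d s (x # xs) = (case d s x of (s1, y) \<Rightarrow> (case sweep d s1 xs of (s2, ys) \<Rightarrow> (s2, y # ys)))"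

datatype 's res = Cont 's | Acc | Rej

fun around :: "('s \<Rightarrow> cell \<Rightarrow> 's \<times> cell) \<Rightarrow> ('s \<Rightarrow> 's res) \<Rightarrow> 's res \<times> cell list \<Rightarrow> 's res \<times> cell list" where
  "around d fin (Cont s, xs) = (case sweep d s xs of (s', ys) \<Rightarrow> (fin s', ys))"
| "around d fin (Acc, xs) = (Acc, xs)"
| "around d fin (Rej, xs) = (Rej, xs)"

lemma sweep_Cons_eq: "sweep d s (x # xs) = (let (s1, y) = d s x; (s2, ys) = sweep d s1 xs in (s2, y # ys))"
  by (simp add: Let_def split: prod.split)

lemma sweep_length: "length (snd (sweep d s xs)) = length xs"
proof (induction xs arbitrary: s)
  case (Cons x xs)
  obtain s1 y where 1: "d s x = (s1, y)" by fastforce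
  obtain s2 ys where 2: "sweep d s1 xs = (s2, ys)" by fastforce
  show ?case using Cons.IH[of s1] 1 2 by simp
qed simp

lemma sweep_cb: assumes "\<forall>s x. cb (snd (d s x)) = cb x"
  shows "map cb (snd (sweep d s xs)) = map cb xs"
proof (induction xs arbitrary: s)
  case (Cons x xs)
  obtain s1 y where 1: "d s x = (s1, y)" by fastforce
  obtain s2 ys where 2: "sweep d s1 xs = (s2, ys)" by fastforce
  show ?case using Cons.IH[of s1] 1 2 assms by (simp, metis snd_conv)
qed simp

definition idxR :: "'s::countable \<Rightarrow> 's \<Rightarrow> nat" where
  "idxR s0 s = (if s = s0 then 0 else Suc (to_nat s))"
definition decR :: "'s::countable \<Rightarrow> nat \<Rightarrow> 's" where
  "decR s0 n = (if n = 0 then s0 else from_nat (n - 1))"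

lemma decR_idxR[simp]: "decR s0 (idxR s0 s) = s"
  by (auto simp: decR_def idxR_def)

definition mk_delta :: "('s::countable \<Rightarrow> cell \<Rightarrow> 's \<times> cell) \<Rightarrow> ('s \<Rightarrow> 's res) \<Rightarrow> 's \<Rightarrow> nat \<Rightarrow> nat \<Rightarrow> nat \<times> nat \<times> dir" where
  "mk_delta d fin s0 q sy =
    (if q mod 4 = 0 then (let s = decR s0 (q div 4) in
       if sy = 0 then (case fin s of Acc \<Rightarrow> (1, 0, Stay) | Rej \<Rightarrow> (2, 0, Stay)
                                   | Cont s' \<Rightarrow> (4 * to_nat s' + 3, 0, Lft))
       else (case d s (dec_cell sy) of (s', y) \<Rightarrow> (4 * idxR s0 s', min (enc_cell y) 383, Rgt)))
     else if q mod 4 = 3 then (let s = (from_nat (q div 4) :: 's) in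
       if sy = 0 then (4 * idxR s0 s, 0, Rgt) else (q, sy, Lft))
     else (0, 0, Stay))"

definition mk_tm :: "('s::countable \<Rightarrow> cell \<Rightarrow> 's \<times> cell) \<Rightarrow> ('s \<Rightarrow> 's res) \<Rightarrow> 's \<Rightarrow> tm" where
  "mk_tm d fin s0 = (4 * (Max (to_nat ` (UNIV :: 's set)) + 2), 384, mk_delta d fin s0)"

lemma mk_tm_wf:
  fixes d :: "'s::countable \<Rightarrow> cell \<Rightarrow> 's \<times> cell"
  assumes fin: "finite (UNIV :: 's set)"
  shows "wf_tm (mk_tm d fin' s0)"
proof -
  let ?B = "Max (to_nat ` (UNIV :: 's set))"
  have le: "to_nat (s::'s) \<le> ?B" for s using fin by (intro Max_ge) auto
  have leR: "idxR s0 s \<le> Suc ?B" for s using le[of s] by (auto simp: idxR_def)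
  have A: "4 * idxR s0 s < 4 * ?B + 8" for s using leR[of s] by linarith
  have C: "4 * to_nat s + 3 < 4 * ?B + 8" for s :: 's using le[of s] by linarith
  have "\<forall>q < 4 * ?B + 8. \<forall>a < 384. fst (mk_delta d fin' s0 q a) < 4 * ?B + 8 \<and> fst (snd (mk_delta d fin' s0 q a)) < 384"
  proof (intro allI impI)
    fix q a :: nat assume q: "q < 4 * ?B + 8" and s: "a < 384"
    show "fst (mk_delta d fin' s0 q a) < 4 * ?B + 8 \<and> fst (snd (mk_delta d fin' s0 q a)) < 384"
    proof (cases "q mod 4 = 0")
      case True
      show ?thesis
      proof (cases "a = 0")
        case True
        then show ?thesis using \<open>q mod 4 = 0\<close> C unfolding mk_delta_def Let_def
          by (cases "fin' (decR s0 (q div 4))") simp_all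
      next
        case False
        obtain s' y where "d (decR s0 (q div 4)) (dec_cell a) = (s', y)" by fastforce
        then show ?thesis using \<open>q mod 4 = 0\<close> False A[of s'] unfolding mk_delta_def Let_def
          by simp
      qed
    next
      case False
      then show ?thesis using q s A unfolding mk_delta_def Let_def by simp
    qed
  qed
  then show ?thesis unfolding wf_tm_def mk_tm_def by (simp add: add.commute)
qed

definition vc :: "cell \<Rightarrow> bool" where "vc x = (0 < cb x \<and> cb x < 8)"

lemma four_ne: "4 * (n::nat) \<noteq> 1" "4 * (n::nat) \<noteq> 2" "4 * (n::nat) + 3 \<noteq> 1" "4 * (n::nat) + 3 \<noteq> 2"
  by presburger+

lemma tm_step_R:
  assumes "vc x" "d s x = (s1, y)" "cb y = cb x"
  shows "tm_step (mk_tm d fin s0) (4 * idxR s0 s, L, enc_cell x, R) = (4 * idxR s0 s1, move Rgt L (enc_cell y) R)"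
proof -
  have x: "enc_cell x \<noteq> 0" "dec_cell (enc_cell x) = x" using assms(1) enc_cell_pos dec_enc_cell by (auto simp: vc_def)
  have y: "min (enc_cell y) 383 = enc_cell y" using enc_cell_lt[of y] assms by (auto simp: vc_def)
  show ?thesis unfolding mk_tm_def using four_ne x y assms(2) by (simp add: mk_delta_def Let_def)
qed

lemma tm_step_Rb:
  "tm_step (mk_tm d fin s0) (4 * idxR s0 s, L, 0, R) = (case fin s of Acc \<Rightarrow> (1, L, 0, R) | Rej \<Rightarrow> (2, L, 0, R)
     | Cont s' \<Rightarrow> (4 * to_nat s' + 3, move Lft L 0 R))"
  unfolding mk_tm_def using four_ne by (simp add: mk_delta_def Let_def split: res.split)

lemma tm_step_L:
  fixes s s0 :: "'s::countable"
  shows "tm_step (mk_tm d fin s0) (4 * to_nat s + 3, L, h, R) = (if h = 0 then (4 * idxR s0 s, move Rgt L 0 R)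
      else (4 * to_nat s + 3, move Lft L h R))"
proof -
  have "(4 * to_nat s + 3) mod 4 = 3" "(4 * to_nat s + 3) div 4 = to_nat s" by presburger+
  then show ?thesis unfolding mk_tm_def using four_ne by (simp add: mk_delta_def Let_def)
qed

lemma tm_step_halt: "q = 1 \<or> q = 2 \<Longrightarrow> tm_step M (q, c) = (q, c)"
  by (cases M; cases c) auto

lemma tm_run_halt: "q = 1 \<or> q = 2 \<Longrightarrow> tm_run M n (q, c) = (q, c)"
  unfolding tm_run_def by (induction n) (auto simp: tm_step_halt)

lemma tm_run_Suc: "tm_run M (Suc n) c = tm_run M n (tm_step M c)"
  unfolding tm_run_def by (simp only: funpow_Suc_right comp_def)

lemma tm_run_add: "tm_run M (m + n) c = tm_run M n (tm_run M m c)"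
  unfolding tm_run_def by (simp only: add.commute[of m n] funpow_add comp_def)

lemma fwd:
  assumes pres: "\<forall>s x. cb (snd (d s x)) = cb x"
  shows "\<forall>x\<in>set (x # xs). vc x \<Longrightarrow>
    tm_run (mk_tm d fin s0) (Suc (length xs)) (4 * idxR s0 s, L, enc_cell x, map enc_cell xs @ replicate b 0)
    = (case sweep d s (x # xs) of (s', ys) \<Rightarrow> (4 * idxR s0 s', rev (map enc_cell ys) @ L, 0, replicate (b - 1) 0))"
proof (induction xs arbitrary: s L x)
  case Nil
  obtain s1 y where 1: "d s x = (s1, y)" by fastforce
  have "cb y = cb x" using pres 1 by (metis snd_conv)
  then show ?case using Nil 1 by (simp add: tm_run_Suc tm_step_R tm_run_def) (cases b; simp)
next
  case (Cons x2 xs)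
  obtain s1 y where 1: "d s x = (s1, y)" by fastforce
  have "cb y = cb x" using pres 1 by (metis snd_conv)
  then have st: "tm_step (mk_tm d fin s0) (4 * idxR s0 s, L, enc_cell x, map enc_cell (x2 # xs) @ replicate b 0)
     = (4 * idxR s0 s1, enc_cell y # L, enc_cell x2, map enc_cell xs @ replicate b 0)"
    using Cons.prems 1 by (simp add: tm_step_R)
  obtain s2 ys where 2: "sweep d s1 (x2 # xs) = (s2, ys)" by fastforce
  show ?case unfolding tm_run_Suc[of _ "Suc (length xs)"] length_Cons st
    using Cons.IH[of x2 s1 "enc_cell y # L"] Cons.prems 1 2 by simp
qed

lemma bwd0:
  fixes s s0 :: "'s::countable"
  shows "\<forall>z\<in>set (y # zs). vc z \<Longrightarrow>
   tm_run (mk_tm d fin s0) (Suc (length zs)) (4 * to_nat s + 3, map enc_cell zs @ replicate a 0, enc_cell y, R)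
   = (4 * to_nat s + 3, replicate (a - 1) 0, 0, map enc_cell (rev zs @ [y]) @ R)"
proof (induction zs arbitrary: y R)
  case Nil
  have "enc_cell y \<noteq> 0" using Nil enc_cell_pos by (auto simp: vc_def)
  then show ?case by (simp add: tm_run_Suc tm_step_L tm_run_def) (cases a; simp)
next
  case (Cons z zs)
  have "enc_cell y \<noteq> 0" using Cons.prems enc_cell_pos by (auto simp: vc_def)
  then have st: "tm_step (mk_tm d fin s0) (4 * to_nat s + 3, map enc_cell (z # zs) @ replicate a 0, enc_cell y, R)
     = (4 * to_nat s + 3, map enc_cell zs @ replicate a 0, enc_cell z, enc_cell y # R)"
    by (simp add: tm_step_L)
  show ?case unfolding tm_run_Suc[of _ "Suc (length zs)"] length_Cons st
    using Cons.IH[of z "enc_cell y # R"] Cons.prems by simp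
qed

lemma vc_sweep: assumes pres: "\<forall>s x. cb (snd (d s x)) = cb x" and "\<forall>x\<in>set xs. vc x"
  shows "\<forall>x\<in>set (snd (sweep d s xs)). vc x"
proof -
  have "map cb (snd (sweep d s xs)) = map cb xs" using sweep_cb[OF pres] .
  then have "cb ` set (snd (sweep d s xs)) = cb ` set xs" by (metis set_map)
  then show ?thesis using assms(2) unfolding vc_def by (metis image_iff)
qed

lemma round_cont:
  fixes s s0 s'' :: "'s::countable"
  assumes pres: "\<forall>s x. cb (snd (d s x)) = cb x" and v: "\<forall>x\<in>set (x # xs). vc x"
    and sw: "sweep d s (x # xs) = (s', ys)" and f: "fin s' = Cont s''"
  shows "\<exists>a' b' y ys'. ys = y # ys' \<and> tm_run (mk_tm d fin s0) (2 * length (x # xs) + 2)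
     (4 * idxR s0 s, replicate a 0, enc_cell x, map enc_cell xs @ replicate b 0)
     = (4 * idxR s0 s'', replicate a' 0, enc_cell y, map enc_cell ys' @ replicate b' 0)"
proof -
  let ?M = "mk_tm d fin s0"
  have len: "length ys = Suc (length xs)" using sweep_length[of d s "x # xs"] sw by simp
  then obtain y ys' where ys: "ys = y # ys'" by (cases ys) auto
  have vys: "\<forall>z\<in>set ys. vc z" using vc_sweep[OF pres v, of s] sw by simp
  have 1: "tm_run ?M (Suc (length xs)) (4 * idxR s0 s, replicate a 0, enc_cell x, map enc_cell xs @ replicate b 0)
     = (4 * idxR s0 s', rev (map enc_cell ys) @ replicate a 0, 0, replicate (b - 1) 0)"
    using fwd[OF pres v, of fin s0 s "replicate a 0" b] sw by simp
  have ne: "ys \<noteq> []" using ys by simp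
  have r: "rev (map enc_cell ys) = enc_cell (last ys) # map enc_cell (rev (butlast ys))"
  proof -
    have "ys = butlast ys @ [last ys]" using ne by simp
    then have "rev (map enc_cell ys) = rev (map enc_cell (butlast ys @ [last ys]))" by simp
    also have "\<dots> = enc_cell (last ys) # map enc_cell (rev (butlast ys))" by (simp add: rev_map)
    finally show ?thesis .
  qed
  have 2: "tm_step ?M (4 * idxR s0 s', rev (map enc_cell ys) @ replicate a 0, 0, replicate (b - 1) 0)
     = (4 * to_nat s'' + 3, map enc_cell (rev (butlast ys)) @ replicate a 0, enc_cell (last ys), 0 # replicate (b - 1) 0)"
    unfolding tm_step_Rb f r by simp
  have lz: "length (rev (butlast ys)) = length xs" using len by simp
  have vz: "\<forall>z\<in>set (last ys # rev (butlast ys)). vc z" using vys ne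
    by (auto dest: in_set_butlastD)
  have 3: "tm_run ?M (Suc (length xs)) (4 * to_nat s'' + 3, map enc_cell (rev (butlast ys)) @ replicate a 0, enc_cell (last ys), 0 # replicate (b - 1) 0)
     = (4 * to_nat s'' + 3, replicate (a - 1) 0, 0, map enc_cell ys @ 0 # replicate (b - 1) 0)"
    using bwd0[OF vz, of d fin s0 s'' a "0 # replicate (b - 1) 0"] lz ne len by (simp add: append_butlast_last_id)
  have 4: "tm_step ?M (4 * to_nat s'' + 3, replicate (a - 1) 0, 0, map enc_cell ys @ 0 # replicate (b - 1) 0)
     = (4 * idxR s0 s'', replicate (Suc (a - 1)) 0, enc_cell y, map enc_cell ys' @ replicate (Suc (b - 1)) 0)"
    unfolding tm_step_L ys by simp
  have "2 * length (x # xs) + 2 = Suc (length xs) + (1 + (Suc (length xs) + 1))" by simp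
  then have "tm_run ?M (2 * length (x # xs) + 2) (4 * idxR s0 s, replicate a 0, enc_cell x, map enc_cell xs @ replicate b 0)
     = (4 * idxR s0 s'', replicate (Suc (a - 1)) 0, enc_cell y, map enc_cell ys' @ replicate (Suc (b - 1)) 0)"
    using 1 2 3 4 by (simp only: tm_run_add tm_run_Suc) (simp add: tm_run_def)
  then show ?thesis using ys by blast
qed

lemma around_halt: "r = Acc \<or> r = Rej \<Longrightarrow> (around d fin ^^ K) (r, xs) = (r, xs)"
  by (induction K) auto

lemma rounds:
  fixes s s0 :: "'s::countable"
  assumes pres: "\<forall>s x. cb (snd (d s x)) = cb x"
  shows "\<forall>x\<in>set (x # xs). vc x \<Longrightarrow> (around d fin ^^ K) (Cont s, x # xs) = (r, zs) \<Longrightarrow>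
    r = Acc \<or> r = Rej \<Longrightarrow> K * (2 * length (x # xs) + 2) \<le> T \<Longrightarrow>
    tm_state (tm_run (mk_tm d fin s0) T (4 * idxR s0 s, replicate a 0, enc_cell x, map enc_cell xs @ replicate b 0))
     = (if r = Acc then 1 else 2)"
proof (induction K arbitrary: s x xs a b T)
  case 0
  then show ?case by auto
next
  case (Suc K)
  obtain s' ys where sw: "sweep d s (x # xs) = (s', ys)" by fastforce
  have "(around d fin ^^ Suc K) (Cont s, x # xs) = (around d fin ^^ K) (around d fin (Cont s, x # xs))"
    by (simp only: funpow_Suc_right comp_def)
  then have ar: "(around d fin ^^ K) (fin s', ys) = (r, zs)" using Suc.prems(2) sw
    by simp
  let ?n = "2 * length (x # xs) + 2"
  show ?case
  proof (cases "fin s'")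
    case (Cont s'')
    obtain a' b' y ys' where ys: "ys = y # ys'" and run: "tm_run (mk_tm d fin s0) ?n
     (4 * idxR s0 s, replicate a 0, enc_cell x, map enc_cell xs @ replicate b 0)
     = (4 * idxR s0 s'', replicate a' 0, enc_cell y, map enc_cell ys' @ replicate b' 0)"
      using round_cont[where d=d and x=x and xs=xs and s=s and s'=s' and ys=ys and fin=fin and s''=s'' and s0=s0 and a=a and b=b, OF pres Suc.prems(1) sw Cont] by blast
    have len: "length (y # ys') = length (x # xs)" using sweep_length[of d s "x # xs"] sw ys by simp
    have vys: "\<forall>z\<in>set (y # ys'). vc z" using vc_sweep[OF pres Suc.prems(1), of s] sw ys by simp
    have T: "T = ?n + (T - ?n)" and T': "K * (2 * length (y # ys') + 2) \<le> T - ?n" using Suc.prems(4) len by auto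
    have IH: "tm_state (tm_run (mk_tm d fin s0) (T - ?n) (4 * idxR s0 s'', replicate a' 0, enc_cell y, map enc_cell ys' @ replicate b' 0))
       = (if r = Acc then 1 else 2)"
      using Suc.IH[OF vys _ Suc.prems(3) T'] ar Cont ys by simp
    show ?thesis using IH run by (subst T) (simp only: tm_run_add)
  next
    case Acc
    then have r: "r = Acc" using ar around_halt[of Acc K d fin ys] by auto
    have 1: "tm_run (mk_tm d fin s0) (Suc (length xs)) (4 * idxR s0 s, replicate a 0, enc_cell x, map enc_cell xs @ replicate b 0)
     = (4 * idxR s0 s', rev (map enc_cell ys) @ replicate a 0, 0, replicate (b - 1) 0)"
      using fwd[OF pres Suc.prems(1), of fin s0 s "replicate a 0" b] sw by simp
    have T: "T = Suc (length xs) + (1 + (T - Suc (length xs) - 1))" using Suc.prems(4) by simp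
    have one: "tm_run M 1 c = tm_step M c" for M c by (simp add: tm_run_def)
    have 2: "tm_run (mk_tm d fin s0) (1 + (T - Suc (length xs) - 1)) (4 * idxR s0 s', rev (map enc_cell ys) @ replicate a 0, 0, replicate (b - 1) 0) = (1, rev (map enc_cell ys) @ replicate a 0, 0, replicate (b - 1) 0)"
      unfolding tm_run_add one tm_step_Rb using Acc by (simp add: tm_run_halt)
    show ?thesis using 1 2 Acc r by (subst T, subst tm_run_add) (simp add: tm_state_def)
  next
    case Rej
    then have r: "r = Rej" using ar around_halt[of Rej K d fin ys] by auto
    have 1: "tm_run (mk_tm d fin s0) (Suc (length xs)) (4 * idxR s0 s, replicate a 0, enc_cell x, map enc_cell xs @ replicate b 0)
     = (4 * idxR s0 s', rev (map enc_cell ys) @ replicate a 0, 0, replicate (b - 1) 0)"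
      using fwd[OF pres Suc.prems(1), of fin s0 s "replicate a 0" b] sw by simp
    have T: "T = Suc (length xs) + (1 + (T - Suc (length xs) - 1))" using Suc.prems(4) by simp
    have one: "tm_run M 1 c = tm_step M c" for M c by (simp add: tm_run_def)
    have 2: "tm_run (mk_tm d fin s0) (1 + (T - Suc (length xs) - 1)) (4 * idxR s0 s', rev (map enc_cell ys) @ replicate a 0, 0, replicate (b - 1) 0) = (2, rev (map enc_cell ys) @ replicate a 0, 0, replicate (b - 1) 0)"
      unfolding tm_run_add one tm_step_Rb using Rej by (simp add: tm_run_halt)
    show ?thesis using 1 2 Rej r by (subst T, subst tm_run_add) (simp add: tm_state_def)
  qed
qed

declare bits.simps[simp del]

datatype bmode = BKeep | BCons | BClr

type_synonym pstate = "bool \<times> (bool \<times> bool option) option"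

definition gd :: "('u \<Rightarrow> bmode) \<Rightarrow> ('u \<Rightarrow> bool \<Rightarrow> bool \<Rightarrow> bool option \<Rightarrow> bool \<Rightarrow> bool \<Rightarrow> 'u \<times> bool \<times> bool)
  \<Rightarrow> ('u \<Rightarrow> bool \<Rightarrow> bool \<Rightarrow> bool option \<Rightarrow> 'u \<times> bool \<times> bool option) \<Rightarrow> ('u \<Rightarrow> bool \<Rightarrow> 'u)
  \<Rightarrow> pstate \<times> 'u \<Rightarrow> cell \<Rightarrow> (pstate \<times> 'u) \<times> cell" where
  "gd bm lf cf ff st x = (case st of ((r, cur), u) \<Rightarrow>
    (if cb x = 1 \<or> cb x = 2 then
      (case cur of None \<Rightarrow> (((r, cur), u), x)
       | Some (p, fu) \<Rightarrow> (let fresh = (fu = None \<and> \<not> cK x);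
            fu' = (if fresh then Some (cb x = 2) else fu);
            k' = (case bm u of BKeep \<Rightarrow> cK x | BCons \<Rightarrow> cK x \<or> fresh | BClr \<Rightarrow> False)
          in (((r, Some (p, fu')), u), Cell (cb x) (cT x) (cC x) k' (cSel x) (cS x))))
    else if cb x = 3 \<or> cb x = 4 then
      (case cur of None \<Rightarrow> (((r, Some (cb x = 3, None)), u), x)
       | Some (p, fu) \<Rightarrow> (case lf u r p fu (cT x) (cC x) of (u', t', c') \<Rightarrow>
           (((r, Some (cb x = 3, None)), u'), Cell (cb x) t' c' (cK x) (cSel x) (cS x))))
    else if cb x = 5 then
      (case (case cur of None \<Rightarrow> (u, cT x, cC x) | Some (p, fu) \<Rightarrow> lf u r p fu (cT x) (cC x)) of
        (u1, t', c') \<Rightarrow> (case cf u1 r (cSel x) (cS x) of (u2, sel', s') \<Rightarrow>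
          (((r, None), u2), Cell 5 t' c' (cK x) sel' s')))
    else if cb x = 6 then (((True, None), ff u r), x)
    else (((r, cur), u), x)))"

lemma gd_cb: "cb (snd (gd bm lf cf ff st x)) = cb x"
  unfolding gd_def Let_def by (auto split: prod.split option.split)

record alit = lv :: nat  lp :: bool  lj :: nat  lt :: bool  lc :: bool
record acl = lits :: "alit list"  csel :: bool  cs :: "bool option"

definition fu_of :: "alit \<Rightarrow> bool option" where
  "fu_of l = (if lj l < length (bits (lv l)) then Some (bits (lv l) ! lj l = 2) else None)"

definition jupd :: "bmode \<Rightarrow> alit \<Rightarrow> nat" where
  "jupd m l = (case m of BKeep \<Rightarrow> lj l | BCons \<Rightarrow> (if lj l < length (bits (lv l)) then Suc (lj l) else lj l) | BClr \<Rightarrow> 0)"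

fun bitcells :: "nat \<Rightarrow> nat list \<Rightarrow> cell list" where
  "bitcells j [] = []"
| "bitcells j (s # ss) = Cell s False False (0 < j) False None # bitcells (j - 1) ss"

fun rep_lits :: "bool \<times> bool \<Rightarrow> alit list \<Rightarrow> bool \<Rightarrow> bool option \<Rightarrow> cell list" where
  "rep_lits pf [] sel s = [Cell 5 (fst pf) (snd pf) False sel s]"
| "rep_lits pf (l # ls) sel s = Cell (if lp l then 3 else 4) (fst pf) (snd pf) False False None
     # bitcells (lj l) (bits (lv l)) @ rep_lits (lt l, lc l) ls sel s"

definition rep_clause :: "acl \<Rightarrow> cell list" where
  "rep_clause c = rep_lits (False, False) (lits c) (csel c) (cs c)"

definition six :: cell where "six = Cell 6 False False False False None"

definition rep_form :: "acl list \<Rightarrow> cell list" where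
  "rep_form A = concat (map rep_clause A) @ [six]"

definition rep_tape :: "acl list \<Rightarrow> acl list \<Rightarrow> cell list" where
  "rep_tape A1 A2 = rep_form A1 @ rep_form A2"

fun alits :: "('u \<Rightarrow> bmode) \<Rightarrow> ('u \<Rightarrow> bool \<Rightarrow> bool \<Rightarrow> bool option \<Rightarrow> bool \<Rightarrow> bool \<Rightarrow> 'u \<times> bool \<times> bool)
   \<Rightarrow> 'u \<Rightarrow> bool \<Rightarrow> alit list \<Rightarrow> 'u \<times> alit list" where
  "alits bm lf u r [] = (u, [])"
| "alits bm lf u r (l # ls) = (case lf u r (lp l) (fu_of l) (lt l) (lc l) of (u1, t', c') \<Rightarrow>
     (case alits bm lf u1 r ls of (u2, ls') \<Rightarrow> (u2, l\<lparr>lj := jupd (bm u) l, lt := t', lc := c'\<rparr> # ls')))"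

definition arest where
  "arest bm lf cf u r ls sel s = (case alits bm lf u r ls of (u1, ls') \<Rightarrow>
     (case cf u1 r sel s of (u2, sel', s') \<Rightarrow> (u2, ls', sel', s')))"

definition aclause where
  "aclause bm lf cf u r c = (case arest bm lf cf u r (lits c) (csel c) (cs c) of (u2, ls', sel', s') \<Rightarrow>
     (u2, c\<lparr>lits := ls', csel := sel', cs := s'\<rparr>))"

fun aform where
  "aform bm lf cf u r [] = (u, [])"
| "aform bm lf cf u r (c # A) = (case aclause bm lf cf u r c of (u1, c') \<Rightarrow>
     (case aform bm lf cf u1 r A of (u2, A') \<Rightarrow> (u2, c' # A')))"

definition atape where
  "atape bm lf cf ff u A1 A2 = (case aform bm lf cf u False A1 of (u1, A1') \<Rightarrow>
     (case aform bm lf cf (ff u1 False) True A2 of (u2, A2') \<Rightarrow> (ff u2 True, A1', A2')))"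

lemma sweep_append: "sweep d s (xs @ ys) = (case sweep d s xs of (s1, xs') \<Rightarrow> (case sweep d s1 ys of (s2, ys') \<Rightarrow> (s2, xs' @ ys')))"
  by (induction xs arbitrary: s) (auto split: prod.split)

lemma bits_set: "set (bits n) \<subseteq> {1, 2}"
  by (induction n rule: bits.induct) (subst bits.simps, auto)

lemma sweep_bits:
  assumes "set ss \<subseteq> {1, 2}"
  shows "sweep (gd bm lf cf ff) ((r, Some (p, fu0)), u) (bitcells j ss) =
    (((r, Some (p, case fu0 of Some f \<Rightarrow> Some f | None \<Rightarrow> (if j < length ss then Some (ss ! j = 2) else None))), u),
     bitcells (case bm u of BKeep \<Rightarrow> j | BClr \<Rightarrow> 0 | BCons \<Rightarrow> (if fu0 = None \<and> j < length ss then Suc j else j)) ss)"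
  using assms
proof (induction ss arbitrary: j fu0)
  case Nil
  then show ?case by (cases "bm u"; cases fu0; simp)
next
  case (Cons s ss)
  have s: "s = 1 \<or> s = 2" using Cons.prems by auto
  show ?case
  proof (cases j)
    case 0
    show ?thesis
    proof (cases fu0)
      case None
      then show ?thesis using 0 Cons s by (cases "bm u"; auto simp: gd_def Let_def)
    next
      case (Some f)
      then show ?thesis using 0 Cons s by (cases "bm u"; auto simp: gd_def Let_def)
    qed
  next
    case (Suc j')
    then show ?thesis using Cons s by (cases "bm u"; cases fu0; auto simp: gd_def Let_def)
  qed
qed

lemma sweep_lbits:
  "sweep (gd bm lf cf ff) ((r, Some (p, None)), u) (bitcells (lj l) (bits (lv l))) =
   (((r, Some (p, fu_of l)), u), bitcells (jupd (bm u) l) (bits (lv l)))"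
  using sweep_bits[OF bits_set, of bm lf cf ff r p None u "lj l" "lv l"]
  by (cases "bm u") (simp_all add: fu_of_def jupd_def)

lemma sweep_restA:
  "sweep (gd bm lf cf ff) ((r, Some (p, fu)), u) (rep_lits (t, c) ls sel s) =
    (case lf u r p fu t c of (u1, t', c') \<Rightarrow> (case arest bm lf cf u1 r ls sel s of (u2, ls', sel', s') \<Rightarrow>
      (((r, None), u2), rep_lits (t', c') ls' sel' s')))"
proof (induction ls arbitrary: p fu t c u)
  case Nil
  show ?case by (auto simp: gd_def arest_def split: prod.split)
next
  case (Cons l ls)
  obtain u1 t' c' where 1: "lf u r p fu t c = (u1, t', c')" by (metis prod.exhaust)
  have m: "gd bm lf cf ff ((r, Some (p, fu)), u) (Cell (if lp l then 3 else 4) t c False False None)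
     = (((r, Some (lp l, None)), u1), Cell (if lp l then 3 else 4) t' c' False False None)"
    using 1 by (simp add: gd_def)
  obtain u2 t'' c'' where 2: "lf u1 r (lp l) (fu_of l) (lt l) (lc l) = (u2, t'', c'')" by (metis prod.exhaust)
  obtain u3 ls' sel' s' where 3: "arest bm lf cf u2 r ls sel s = (u3, ls', sel', s')" by (metis prod.exhaust)
  have IH: "sweep (gd bm lf cf ff) ((r, Some (lp l, fu_of l)), u1) (rep_lits (lt l, lc l) ls sel s) =
     (((r, None), u3), rep_lits (t'', c'') ls' sel' s')" using Cons.IH[where p="lp l" and fu="fu_of l" and t="lt l" and c="lc l" and u=u1] 2 3 by simp
  obtain ls'' where 4: "alits bm lf u2 r ls = (ls'', ls')" and 5: "cf ls'' r sel s = (u3, sel', s')"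
    using 3 unfolding arest_def by (auto split: prod.splits)
  have A: "arest bm lf cf u1 r (l # ls) sel s = (u3, l\<lparr>lj := jupd (bm u1) l, lt := t'', lc := c''\<rparr> # ls', sel', s')"
    unfolding arest_def using 2 4 5 by simp
  show ?case using m IH A 1 by (simp add: sweep_lbits sweep_append)
qed

lemma sweep_clause:
  "sweep (gd bm lf cf ff) ((r, None), u) (rep_clause c) =
    (case aclause bm lf cf u r c of (u2, c') \<Rightarrow> (((r, None), u2), rep_clause c'))"
proof (cases "lits c")
  case Nil
  then show ?thesis by (auto simp: gd_def rep_clause_def aclause_def arest_def split: prod.split)
next
  case (Cons l ls)
  have m: "gd bm lf cf ff ((r, None), u) (Cell (if lp l then 3 else 4) False False False False None)
     = (((r, Some (lp l, None)), u), Cell (if lp l then 3 else 4) False False False False None)"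
    by (simp add: gd_def)
  obtain u1 t' c' where 1: "lf u r (lp l) (fu_of l) (lt l) (lc l) = (u1, t', c')" by (metis prod.exhaust)
  obtain u3 ls' sel' s' where 3: "arest bm lf cf u1 r ls (csel c) (cs c) = (u3, ls', sel', s')" by (metis prod.exhaust)
  obtain ls'' where 4: "alits bm lf u1 r ls = (ls'', ls')" and 5: "cf ls'' r (csel c) (cs c) = (u3, sel', s')"
    using 3 unfolding arest_def by (auto split: prod.splits)
  have A: "aclause bm lf cf u r c = (u3, c\<lparr>lits := l\<lparr>lj := jupd (bm u) l, lt := t', lc := c'\<rparr> # ls', csel := sel', cs := s'\<rparr>)"
    unfolding aclause_def arest_def using Cons 1 4 5 by simp
  show ?thesis unfolding rep_clause_def A using Cons m 1 3
    by (simp add: sweep_lbits sweep_append sweep_restA)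
qed

lemma sweep_form:
  "sweep (gd bm lf cf ff) ((r, None), u) (concat (map rep_clause A)) =
    (case aform bm lf cf u r A of (u2, A') \<Rightarrow> (((r, None), u2), concat (map rep_clause A')))"
proof (induction A arbitrary: u)
  case (Cons c A)
  then show ?case by (auto simp: sweep_append sweep_clause split: prod.split)
qed simp

lemma sweep_six: "sweep (gd bm lf cf ff) ((r, None), u) [six] = (((True, None), ff u r), [six])"
  by (simp add: six_def gd_def)

lemma sweep_tape:
  "sweep (gd bm lf cf ff) ((False, None), u) (rep_tape A1 A2) =
    (case atape bm lf cf ff u A1 A2 of (u2, A1', A2') \<Rightarrow> (((True, None), u2), rep_tape A1' A2'))"
proof -
  obtain u1 A1' where 1: "aform bm lf cf u False A1 = (u1, A1')" by fastforce
  obtain u2 A2' where 2: "aform bm lf cf (ff u1 False) True A2 = (u2, A2')" by fastforce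
  show ?thesis unfolding rep_tape_def rep_form_def atape_def 1 2
    by (simp only: sweep_append sweep_form 1 2 sweep_six prod.case append_assoc)
qed

datatype qid = Q1a | Q1b | Q2a | Q2b

lemma qid_UNIV: "(UNIV :: qid set) = {Q1a, Q1b, Q2a, Q2b}"
  using qid.exhaust by auto

instance qid :: finite
  by standard (simp add: qid_UNIV)

instance qid :: countable by countable_datatype

datatype ust =
  UFind qid bool bool bool bool bool bool bool
| UX qid "bool option option" "bool option option" "bool option option"
| UY qid bool
| UZ qid
| USel bool bool qid bool bool

instance ust :: countable by countable_datatype

lemma ust_UNIV_sub: "(UNIV :: ust set) \<subseteq>
   range (\<lambda>(q, a, b, c, d, e, f, g). UFind q a b c d e f g) \<union>
   range (\<lambda>(q, a, b, c). UX q a b c) \<union> range (\<lambda>(q, b). UY q b) \<union> range UZ \<union>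
   range (\<lambda>(a, b, q, c, d). USel a b q c d)"
proof
  fix x :: ust show "x \<in> range (\<lambda>(q, a, b, c, d, e, f, g). UFind q a b c d e f g) \<union>
   range (\<lambda>(q, a, b, c). UX q a b c) \<union> range (\<lambda>(q, b). UY q b) \<union> range UZ \<union>
   range (\<lambda>(a, b, q, c, d). USel a b q c d)"
  proof (cases x)
    case (UFind q a b c d e f g) then show ?thesis by (auto simp: image_iff intro!: exI[of _ "(q, a, b, c, d, e, f, g)"])
  next
    case (UX q a b c) then show ?thesis by (auto simp: image_iff intro!: exI[of _ "(q, a, b, c)"])
  next
    case (UY q b) then show ?thesis by (auto simp: image_iff intro!: exI[of _ "(q, b)"])
  next
    case (UZ q) then show ?thesis by auto
  next
    case (USel a b q c d) then show ?thesis by (auto simp: image_iff intro!: exI[of _ "(a, b, q, c, d)"])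
  qed
qed

instance ust :: finite
  by standard (rule finite_subset[OF ust_UNIV_sub], simp)

fun act :: "qid \<Rightarrow> bool \<Rightarrow> bool" where
  "act q False = (q = Q1a \<or> q = Q1b)"
| "act q True = (q = Q1a \<or> q = Q2a)"

fun uni :: "qid \<Rightarrow> bool \<Rightarrow> bool" where
  "uni q False = (q = Q2a \<or> q = Q2b)"
| "uni q True = (q = Q1b \<or> q = Q2b)"

fun BM :: "ust \<Rightarrow> bmode" where
  "BM (UY q b) = BCons"
| "BM (UZ q) = BClr"
| "BM (USel a b q c d) = BClr"
| "BM u = BKeep"

fun LF :: "ust \<Rightarrow> bool \<Rightarrow> bool \<Rightarrow> bool option \<Rightarrow> bool \<Rightarrow> bool \<Rightarrow> ust \<times> bool \<times> bool" where
  "LF (UFind q cf fd an hp pn pt nn) r p fu t c =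
     (UFind q cf fd (an \<and> (p \<or> t)) (hp \<or> p) (pn \<or> (p \<and> \<not> t)) (pt \<or> (p \<and> t)) (nn \<or> (\<not> p \<and> \<not> t)), t, True)"
| "LF (UX q res pp pn) r p fu t c =
     (UX q res (if p \<and> \<not> t \<and> pp = None then Some fu else pp) (if \<not> p \<and> \<not> t \<and> pn = None then Some fu else pn), t, c)"
| "LF (UY q b) r p fu t c = (UY q b, t, c \<and> fu = Some b)"
| "LF (UZ q) r p fu t c = (UZ q, t \<or> (c \<and> fu = None), False)"
| "LF (USel a b q d e) r p fu t c = (USel a b q d e, False, False)"

definition smode :: "qid \<Rightarrow> bool \<Rightarrow> bool \<Rightarrow> bool \<Rightarrow> bool \<Rightarrow> bool \<Rightarrow> bool option" where
  "smode q r sel an pn nn = (if act q r \<and> an \<and> pn then Some True else if uni q r \<and> sel \<and> nn then Some False else None)"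

fun CF :: "ust \<Rightarrow> bool \<Rightarrow> bool \<Rightarrow> bool option \<Rightarrow> ust \<times> bool \<times> bool option" where
  "CF (UFind q cf fd an hp pn pt nn) r sel s =
     (UFind q (cf \<or> (act q r \<and> an \<and> \<not> hp) \<or> (uni q r \<and> sel \<and> pt)) (fd \<or> smode q r sel an pn nn \<noteq> None)
        True False False False False, sel, smode q r sel an pn nn)"
| "CF (UX q res pp pn) r sel s =
     (UX q (if res = None then (case s of None \<Rightarrow> None
              | Some pol \<Rightarrow> Some (case (if pol then pp else pn) of None \<Rightarrow> None | Some f \<Rightarrow> f)) else res) None None, sel, s)"
| "CF (UY q b) r sel s = (UY q b, sel, s)"
| "CF (UZ q) r sel s = (UZ q, sel, None)"
| "CF (USel isN rt q fd pv) r sel s =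
     (if r = rt then (USel isN rt q (fd \<or> pv) (isN \<and> sel), pv, None) else (USel isN rt q fd pv, sel, None))"

definition FF :: "ust \<Rightarrow> bool \<Rightarrow> ust" where "FF u r = u"

definition p0 :: pstate where "p0 = (False, None)"

definition find0 :: "qid \<Rightarrow> ust" where "find0 q = UFind q False False True False False False False"

definition initS :: "bool \<Rightarrow> qid \<Rightarrow> (pstate \<times> ust) res" where
  "initS r q = Cont (p0, USel False r q False True)"
definition nextS :: "bool \<Rightarrow> qid \<Rightarrow> (pstate \<times> ust) res" where
  "nextS r q = Cont (p0, USel True r q False False)"

fun after :: "qid \<Rightarrow> bool \<Rightarrow> (pstate \<times> ust) res" where
  "after Q1a sat = (if sat then initS True Q1b else initS False Q2a)"
| "after Q1b sat = (if sat then Rej else nextS True Q1b)"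
| "after Q2a sat = (if sat then initS False Q2b else nextS False Q2a)"
| "after Q2b sat = (if sat then Rej else nextS True Q2b)"

fun onfound :: "bool \<Rightarrow> qid \<Rightarrow> (pstate \<times> ust) res" where
  "onfound False Q2b = initS True Q2b"
| "onfound r q = Cont (p0, find0 q)"

fun exhausted :: "bool \<Rightarrow> qid \<Rightarrow> (pstate \<times> ust) res" where
  "exhausted True Q1b = initS False Q2a"
| "exhausted False Q2a = Acc"
| "exhausted False Q2b = Acc"
| "exhausted True Q2b = nextS False Q2b"
| "exhausted r q = Rej"

fun FIN :: "pstate \<times> ust \<Rightarrow> (pstate \<times> ust) res" where
  "FIN (ps, UFind q cf fd an hp pn pt nn) = (if cf then after q False else if fd then Cont (p0, UX q None None None) else after q True)"
| "FIN (ps, UX q res pp pn) = (case res of Some (Some b) \<Rightarrow> Cont (p0, UY q b) | _ \<Rightarrow> Cont (p0, UZ q))"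
| "FIN (ps, UY q b) = Cont (p0, UX q None None None)"
| "FIN (ps, UZ q) = Cont (p0, find0 q)"
| "FIN (ps, USel isN r q fd pv) = (if fd then onfound r q else exhausted r q)"

definition DD :: "pstate \<times> ust \<Rightarrow> cell \<Rightarrow> (pstate \<times> ust) \<times> cell" where
  "DD = gd BM LF CF FF"

definition RND :: "(pstate \<times> ust) res \<times> cell list \<Rightarrow> (pstate \<times> ust) res \<times> cell list" where
  "RND = around DD FIN"

lemma finite_state: "finite (UNIV :: (pstate \<times> ust) set)"
  by simp

lemma RND_Cont: "RND (Cont (p0, u), rep_tape A1 A2) =
  (case atape BM LF CF FF u A1 A2 of (u', A1', A2') \<Rightarrow> (FIN ((True, None), u'), rep_tape A1' A2'))"
  unfolding RND_def DD_def p0_def by (simp add: sweep_tape split: prod.split)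

definition anc :: "alit list \<Rightarrow> bool" where "anc ls = (\<forall>l\<in>set ls. \<not> lp l \<longrightarrow> lt l)"
definition hpc :: "alit list \<Rightarrow> bool" where "hpc ls = (\<exists>l\<in>set ls. lp l)"
definition pnc :: "alit list \<Rightarrow> bool" where "pnc ls = (\<exists>l\<in>set ls. lp l \<and> \<not> lt l)"
definition ptc :: "alit list \<Rightarrow> bool" where "ptc ls = (\<exists>l\<in>set ls. lp l \<and> lt l)"
definition nnc :: "alit list \<Rightarrow> bool" where "nnc ls = (\<exists>l\<in>set ls. \<not> lp l \<and> \<not> lt l)"

lemma alits_find:
  "alits BM LF (UFind q cf fd an hp pn pt nn) r ls =
   (UFind q cf fd (an \<and> anc ls) (hp \<or> hpc ls) (pn \<or> pnc ls) (pt \<or> ptc ls) (nn \<or> nnc ls), map (\<lambda>l. l\<lparr>lc := True\<rparr>) ls)"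
  by (induction ls arbitrary: an hp pn pt nn)
     (auto simp: anc_def hpc_def pnc_def ptc_def nnc_def jupd_def)

definition confl :: "qid \<Rightarrow> bool \<Rightarrow> acl \<Rightarrow> bool" where
  "confl q r c = ((act q r \<and> anc (lits c) \<and> \<not> hpc (lits c)) \<or> (uni q r \<and> csel c \<and> ptc (lits c)))"
definition smc :: "qid \<Rightarrow> bool \<Rightarrow> acl \<Rightarrow> bool option" where
  "smc q r c = smode q r (csel c) (anc (lits c)) (pnc (lits c)) (nnc (lits c))"
definition findc :: "qid \<Rightarrow> bool \<Rightarrow> acl \<Rightarrow> acl" where
  "findc q r c = c\<lparr>lits := map (\<lambda>l. l\<lparr>lc := True\<rparr>) (lits c), cs := smc q r c\<rparr>"

lemma aform_find:
  "aform BM LF CF (UFind q cf fd True False False False False) r A =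
   (UFind q (cf \<or> (\<exists>c\<in>set A. confl q r c)) (fd \<or> (\<exists>c\<in>set A. smc q r c \<noteq> None)) True False False False False,
    map (findc q r) A)"
  by (induction A arbitrary: cf fd)
     (auto simp: aclause_def arest_def alits_find confl_def smc_def findc_def)

lemma atape_find:
  "atape BM LF CF FF (find0 q) A1 A2 =
   (UFind q ((\<exists>c\<in>set A1. confl q False c) \<or> (\<exists>c\<in>set A2. confl q True c))
     ((\<exists>c\<in>set A1. smc q False c \<noteq> None) \<or> (\<exists>c\<in>set A2. smc q True c \<noteq> None)) True False False False False,
    map (findc q False) A1, map (findc q True) A2)"
  by (simp add: atape_def find0_def aform_find FF_def)

definition pend :: "bool \<Rightarrow> alit list \<Rightarrow> bool option option" where
  "pend pol ls = map_option fu_of (find (\<lambda>l. lp l = pol \<and> \<not> lt l) ls)"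

lemma alits_X:
  "alits BM LF (UX q res pp pn) r ls =
   (UX q res (if pp = None then pend True ls else pp) (if pn = None then pend False ls else pn), ls)"
  by (induction ls arbitrary: pp pn) (auto simp: pend_def jupd_def)

fun xr :: "acl list \<Rightarrow> bool option option" where
  "xr [] = None"
| "xr (c # A) = (case cs c of None \<Rightarrow> xr A | Some pol \<Rightarrow> Some (case pend pol (lits c) of None \<Rightarrow> None | Some f \<Rightarrow> f))"

lemma aform_X:
  "aform BM LF CF (UX q res None None) r A = (UX q (if res = None then xr A else res) None None, A)"
  by (induction A arbitrary: res) (auto simp: aclause_def arest_def alits_X split: option.split)

lemma xr_append: "xr (A1 @ A2) = (if xr A1 = None then xr A2 else xr A1)"
  by (induction A1) (auto split: option.split)

lemma atape_X:
  "atape BM LF CF FF (UX q None None None) A1 A2 = (UX q (xr (A1 @ A2)) None None, A1, A2)"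
  by (simp add: atape_def aform_X FF_def xr_append)

definition ylit :: "bool \<Rightarrow> alit \<Rightarrow> alit" where
  "ylit b l = l\<lparr>lj := jupd BCons l, lc := lc l \<and> fu_of l = Some b\<rparr>"
definition ycl :: "bool \<Rightarrow> acl \<Rightarrow> acl" where
  "ycl b c = c\<lparr>lits := map (ylit b) (lits c)\<rparr>"

lemma atape_Y:
  "atape BM LF CF FF (UY q b) A1 A2 = (UY q b, map (ycl b) A1, map (ycl b) A2)"
proof -
  have L: "alits BM LF (UY q b) r ls = (UY q b, map (ylit b) ls)" for r ls
    by (induction ls) (auto simp: ylit_def)
  have F: "aform BM LF CF (UY q b) r A = (UY q b, map (ycl b) A)" for r A
    by (induction A) (auto simp: aclause_def arest_def L ycl_def)
  show ?thesis by (simp add: atape_def F FF_def)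
qed

definition zlit :: "alit \<Rightarrow> alit" where
  "zlit l = l\<lparr>lj := 0, lt := lt l \<or> (lc l \<and> fu_of l = None), lc := False\<rparr>"
definition zcl :: "acl \<Rightarrow> acl" where
  "zcl c = c\<lparr>lits := map zlit (lits c), cs := None\<rparr>"

lemma atape_Z:
  "atape BM LF CF FF (UZ q) A1 A2 = (UZ q, map zcl A1, map zcl A2)"
proof -
  have L: "alits BM LF (UZ q) r ls = (UZ q, map zlit ls)" for r ls
    by (induction ls) (auto simp: zlit_def jupd_def)
  have F: "aform BM LF CF (UZ q) r A = (UZ q, map zcl A)" for r A
    by (induction A) (auto simp: aclause_def arest_def L zcl_def)
  show ?thesis by (simp add: atape_def F FF_def)
qed

definition clit :: "alit \<Rightarrow> alit" where
  "clit l = l\<lparr>lj := 0, lt := False, lc := False\<rparr>"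
definition ccl :: "acl \<Rightarrow> acl" where
  "ccl c = c\<lparr>lits := map clit (lits c), cs := None\<rparr>"

fun sel_run :: "bool \<Rightarrow> bool \<Rightarrow> bool list \<Rightarrow> bool list" where
  "sel_run isN pv [] = []"
| "sel_run isN pv (s # ss) = pv # sel_run isN (isN \<and> s) ss"

fun setsel :: "acl list \<Rightarrow> bool list \<Rightarrow> acl list" where
  "setsel (c # A) (s # ss) = c\<lparr>csel := s\<rparr> # setsel A ss"
| "setsel A ss = A"

lemma atape_Sel:
  "\<exists>pv'. atape BM LF CF FF (USel isN rt q fd pv) A1 A2 =
    (USel isN rt q (fd \<or> True \<in> set (sel_run isN pv (map csel (if rt then A2 else A1)))) pv',
     if rt then map ccl A1 else setsel (map ccl A1) (sel_run isN pv (map csel A1)),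
     if rt then setsel (map ccl A2) (sel_run isN pv (map csel A2)) else map ccl A2)"
proof -
  have L: "alits BM LF (USel isN rt q fd pv) r ls = (USel isN rt q fd pv, map clit ls)" for r ls fd pv
    by (induction ls) (auto simp: clit_def jupd_def)
  have F1: "r \<noteq> rt \<Longrightarrow> aform BM LF CF (USel isN rt q fd pv) r A = (USel isN rt q fd pv, map ccl A)" for r A fd pv
    by (induction A) (auto simp: aclause_def arest_def L ccl_def)
  have F2: "\<exists>pv'. aform BM LF CF (USel isN rt q fd pv) rt A = (USel isN rt q (fd \<or> True \<in> set (sel_run isN pv (map csel A))) pv',
      setsel (map ccl A) (sel_run isN pv (map csel A)))" for A fd pv
  proof (induction A arbitrary: fd pv)
    case Nil then show ?case by simp
  next
    case (Cons c A)
    obtain pv' where IH: "aform BM LF CF (USel isN rt q (fd \<or> pv) (isN \<and> csel c)) rt A =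
      (USel isN rt q ((fd \<or> pv) \<or> True \<in> set (sel_run isN (isN \<and> csel c) (map csel A))) pv',
       setsel (map ccl A) (sel_run isN (isN \<and> csel c) (map csel A)))" using Cons.IH by blast
    have cc: "c\<lparr>lits := map clit (lits c), csel := pv, cs := None\<rparr> = (ccl c)\<lparr>csel := pv\<rparr>"
      by (simp add: ccl_def)
    show ?case using IH by (simp add: aclause_def arest_def L cc)
  qed
  show ?thesis
  proof (cases rt)
    case True
    then show ?thesis using F2[where A=A2 and fd=fd and pv=pv] F1[where r=False and A=A1 and fd=fd and pv=pv] by (auto simp: atape_def FF_def)
  next
    case False
    then obtain pv' where "aform BM LF CF (USel isN rt q fd pv) False A1 = (USel isN rt q (fd \<or> True \<in> set (sel_run isN pv (map csel A1))) pv',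
      setsel (map ccl A1) (sel_run isN pv (map csel A1)))" using F2[where A=A1 and fd=fd and pv=pv] by auto
    then show ?thesis using False F1[where r=True and A=A2 and pv=pv'] by (auto simp: atape_def FF_def)
  qed
qed

definition alls :: "acl list \<Rightarrow> alit list" where "alls A = concat (map lits A)"

definition skel :: "acl \<Rightarrow> clause \<times> bool" where
  "skel c = (map (\<lambda>l. (lv l, lp l)) (lits c), csel c)"

fun smod :: "qid \<Rightarrow> bool \<Rightarrow> model \<Rightarrow> clause \<times> bool \<Rightarrow> bool" where
  "smod q r I (cl, s) = ((act q r \<longrightarrow> (\<exists>(v, p)\<in>set cl. I v = p)) \<and> (uni q r \<and> s \<longrightarrow> (\<forall>(v, p)\<in>set cl. I v \<noteq> p)))"

definition qmodS :: "qid \<Rightarrow> (clause \<times> bool) list \<Rightarrow> (clause \<times> bool) list \<Rightarrow> model \<Rightarrow> bool" where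
  "qmodS q K1 K2 I = ((\<forall>k\<in>set K1. smod q False I k) \<and> (\<forall>k\<in>set K2. smod q True I k))"

definition qsatS :: "qid \<Rightarrow> (clause \<times> bool) list \<Rightarrow> (clause \<times> bool) list \<Rightarrow> bool" where
  "qsatS q K1 K2 = (\<exists>I. qmodS q K1 K2 I)"

definition hornK :: "(clause \<times> bool) list \<Rightarrow> bool" where
  "hornK K = (\<forall>k\<in>set K. horn_clause (fst k))"

definition PI :: "qid \<Rightarrow> nat set \<Rightarrow> acl list \<Rightarrow> acl list \<Rightarrow> bool" where
  "PI q M A1 A2 = ((\<forall>l\<in>set (alls A1 @ alls A2). (lt l \<longleftrightarrow> lv l \<in> M) \<and> lj l = 0) \<and>
     (\<forall>v\<in>M. \<forall>I. qmodS q (map skel A1) (map skel A2) I \<longrightarrow> I v) \<and>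
     M \<subseteq> lv ` set (alls A1 @ alls A2) \<and> hornK (map skel A1) \<and> hornK (map skel A2))"

fun srcl :: "acl list \<Rightarrow> alit option" where
  "srcl [] = None"
| "srcl (c # A) = (case cs c of None \<Rightarrow> srcl A | Some pol \<Rightarrow> find (\<lambda>l. lp l = pol \<and> \<not> lt l) (lits c))"

lemma srcl_xr: "srcl A = Some l \<Longrightarrow> xr A = Some (fu_of l)"
  by (induction A) (auto simp: pend_def split: option.splits)

lemma skel_findc[simp]: "skel (findc q r c) = skel c"
  by (simp add: skel_def findc_def comp_def)

lemma smod_skel:
  "smod q r I (skel c) = ((act q r \<longrightarrow> (\<exists>l\<in>set (lits c). I (lv l) = lp l)) \<and>
     (uni q r \<and> csel c \<longrightarrow> (\<forall>l\<in>set (lits c). I (lv l) \<noteq> lp l)))"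
  by (auto simp: skel_def)

lemma confl_unsat:
  assumes lt: "\<forall>l\<in>set (lits c). lt l \<longleftrightarrow> lv l \<in> M" and forced: "\<forall>v\<in>M. I v"
    and sm: "smod q r I (skel c)" and cf: "confl q r c"
  shows False
proof -
  have sm': "act q r \<longrightarrow> (\<exists>l\<in>set (lits c). I (lv l) = lp l)"
    "uni q r \<and> csel c \<longrightarrow> (\<forall>l\<in>set (lits c). I (lv l) \<noteq> lp l)" using sm by (auto simp: smod_skel)
  show False
  proof (cases "act q r \<and> anc (lits c) \<and> \<not> hpc (lits c)")
    case True
    then obtain l where l: "l \<in> set (lits c)" "I (lv l) = lp l" using sm' by blast
    then have "\<not> lp l" using True by (auto simp: hpc_def)
    then have "lt l" using True l by (auto simp: anc_def)
    then show False using l lt forced \<open>\<not> lp l\<close> by auto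
  next
    case False
    then have "uni q r \<and> csel c \<and> ptc (lits c)" using cf by (auto simp: confl_def)
    then obtain l where l: "l \<in> set (lits c)" "lp l" "lt l" by (auto simp: ptc_def)
    then show False using sm' lt forced \<open>uni q r \<and> csel c \<and> ptc (lits c)\<close> by auto
  qed
qed

lemma nosrc_sat:
  assumes lt: "\<forall>l\<in>set (lits c). lt l \<longleftrightarrow> lv l \<in> M"
    and cf: "\<not> confl q r c" and sm: "smc q r c = None"
  shows "smod q r (\<lambda>v. v \<in> M) (skel c)"
proof -
  have A: "act q r \<longrightarrow> (\<exists>l\<in>set (lits c). (lv l \<in> M) = lp l)"
  proof
    assume a: "act q r"
    show "\<exists>l\<in>set (lits c). (lv l \<in> M) = lp l"
    proof (cases "anc (lits c)")
      case False
      then obtain l where "l \<in> set (lits c)" "\<not> lp l" "\<not> lt l" by (auto simp: anc_def)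
      then show ?thesis using lt by auto
    next
      case True
      then have "hpc (lits c)" using cf a by (auto simp: confl_def)
      then obtain l where l: "l \<in> set (lits c)" "lp l" by (auto simp: hpc_def)
      have "\<not> pnc (lits c)" using sm a True by (auto simp: smc_def smode_def split: if_splits)
      then have "lt l" using l by (auto simp: pnc_def)
      then show ?thesis using l lt by auto
    qed
  qed
  have B: "uni q r \<and> csel c \<longrightarrow> (\<forall>l\<in>set (lits c). (lv l \<in> M) \<noteq> lp l)"
  proof (intro impI ballI)
    fix l assume u: "uni q r \<and> csel c" and l: "l \<in> set (lits c)"
    have "\<not> ptc (lits c)" using cf u by (auto simp: confl_def)
    moreover have "\<not> nnc (lits c)" using sm u by (auto simp: smc_def smode_def split: if_splits)
    ultimately show "(lv l \<in> M) \<noteq> lp l" using l lt by (cases "lp l") (auto simp: ptc_def nnc_def)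
  qed
  show ?thesis using A B by (simp add: smod_skel)
qed

lemma horn_pos_unique:
  assumes "horn_clause cl" "(v, True) \<in> set cl" "(w, True) \<in> set cl"
  shows "v = w"
proof -
  have sub: "{v. (v, True) \<in> set cl} \<subseteq> fst ` set cl" by force
  have fin: "finite {v. (v, True) \<in> set cl}" by (rule finite_subset[OF sub]) simp
  have "card {v. (v, True) \<in> set cl} \<le> Suc 0" using assms(1) by (simp add: horn_clause_def)
  then have "\<forall>a1\<in>{v. (v, True) \<in> set cl}. \<forall>a2\<in>{v. (v, True) \<in> set cl}. a1 = a2"
    using card_le_Suc0_iff_eq[OF fin] by blast
  then show ?thesis using assms(2,3) by blast
qed

lemma src_forced:
  assumes lt: "\<forall>l\<in>set (lits c). lt l \<longleftrightarrow> lv l \<in> M" and forced: "\<forall>v\<in>M. I v"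
    and sm: "smod q r I (skel c)" and hc: "horn_clause (fst (skel c))"
    and s: "smc q r c = Some pol" and l: "l \<in> set (lits c)" "lp l = pol" "\<not> lt l"
  shows "I (lv l)"
proof (cases pol)
  case True
  then have a: "act q r" "anc (lits c)" using s by (auto simp: smc_def smode_def split: if_splits)
  then obtain l' where l': "l' \<in> set (lits c)" "I (lv l') = lp l'" using sm by (auto simp: smod_skel)
  have "lp l'"
  proof (rule ccontr)
    assume "\<not> lp l'"
    then have "lt l'" using a(2) l'(1) by (auto simp: anc_def)
    then have "I (lv l')" using lt forced l'(1) by auto
    then show False using l'(2) \<open>\<not> lp l'\<close> by simp
  qed
  have "(lv l', True) \<in> set (fst (skel c))" "(lv l, True) \<in> set (fst (skel c))"
    using l' \<open>lp l'\<close> l True by (auto simp: skel_def image_iff intro: bexI[of _ l'] bexI[of _ l])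
  then have "lv l' = lv l" using horn_pos_unique[OF hc] by blast
  then show ?thesis using l' \<open>lp l'\<close> by simp
next
  case False
  then have "uni q r" "csel c" using s by (auto simp: smc_def smode_def split: if_splits)
  then show ?thesis using sm l False by (auto simp: smod_skel)
qed

lemma smc_lit:
  assumes "smc q r c = Some pol"
  shows "\<exists>l\<in>set (lits c). lp l = pol \<and> \<not> lt l"
  using assms by (auto simp: smc_def smode_def pnc_def nnc_def split: if_splits)

lemma bits_inj: "bits a = bits b \<Longrightarrow> a = b"
proof (induction a arbitrary: b rule: bits.induct)
  case (1 a)
  show ?case
  proof (cases "a = 0")
    case True
    then show ?thesis using 1(2) by (subst (asm) (1 2) bits.simps) (auto split: if_splits)
  next
    case False
    then have b0: "b \<noteq> 0" using 1(2) by (subst (asm) (1 2) bits.simps) (auto split: if_splits)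
    have e: "(if even a then 1 else 2 :: nat) = (if even b then 1 else 2)" and r: "bits (a div 2) = bits (b div 2)"
      using 1(2) False b0 by (subst (asm) (1 2) bits.simps; simp)+
    have "a div 2 = b div 2" using 1(1)[OF False r] .
    moreover have "even a = even b" using e by (auto split: if_splits)
    ultimately show ?thesis by (metis div_mult_mod_eq even_iff_mod_2_eq_zero odd_iff_mod_2_eq_one)
  qed
qed

lemma bits_12: "x \<in> set (bits n) \<Longrightarrow> x = 1 \<or> x = 2"
  using bits_set by blast

definition mapl :: "(alit \<Rightarrow> alit) \<Rightarrow> acl list \<Rightarrow> acl list" where
  "mapl f A = map (\<lambda>c. c\<lparr>lits := map f (lits c)\<rparr>) A"

definition mt :: "nat \<Rightarrow> nat \<Rightarrow> alit \<Rightarrow> bool" where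
  "mt vs k l = (k \<le> length (bits (lv l)) \<and> take k (bits (lv l)) = take k (bits vs))"

definition gk :: "nat \<Rightarrow> nat \<Rightarrow> alit \<Rightarrow> alit" where
  "gk vs k l = l\<lparr>lj := min k (length (bits (lv l))), lc := mt vs k l\<rparr>"

lemma srcl_mapl:
  assumes "\<forall>l. lp (f l) = lp l \<and> lt (f l) = lt l"
  shows "srcl (mapl f A) = map_option f (srcl A)"
proof (induction A)
  case (Cons c A)
  have "find (\<lambda>l. lp l = pol \<and> \<not> lt l) (map f ls) = map_option f (find (\<lambda>l. lp l = pol \<and> \<not> lt l) ls)" for pol ls
    using assms by (induction ls) auto
  then show ?case using Cons by (auto simp: mapl_def split: option.split)
qed (simp add: mapl_def)

lemma fu_gk: "fu_of (gk vs k l) = (if k < length (bits (lv l)) then Some (bits (lv l) ! k = 2) else None)"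
  by (auto simp: fu_of_def gk_def min_def)

lemma eq12: "x = 1 \<or> x = 2 \<Longrightarrow> y = 1 \<or> y = 2 \<Longrightarrow> ((x::nat) = 2) = (y = 2) \<longleftrightarrow> x = y"
  by auto

lemma mt_Suc:
  assumes k: "k < length (bits vs)"
  shows "mt vs (Suc k) l = (mt vs k l \<and> fu_of (gk vs k l) = Some (bits vs ! k = 2))"
proof -
  let ?a = "bits (lv l)" and ?b = "bits vs"
  have "mt vs (Suc k) l = (Suc k \<le> length ?a \<and> take (Suc k) ?a = take (Suc k) ?b)" by (simp add: mt_def)
  also have "\<dots> = (k < length ?a \<and> take k ?a = take k ?b \<and> ?a ! k = ?b ! k)"
    using k by (auto simp: take_Suc_conv_app_nth)
  also have "\<dots> = (k < length ?a \<and> take k ?a = take k ?b \<and> (?a ! k = 2) = (?b ! k = 2))"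
    using k bits_12[OF nth_mem[OF k]] by (auto dest: bits_12[OF nth_mem])
  finally show ?thesis by (auto simp: mt_def fu_gk)
qed

lemma ycl_gk:
  assumes k: "k < length (bits vs)"
  shows "map (ycl (bits vs ! k = 2)) (mapl (gk vs k) A) = mapl (gk vs (Suc k)) A"
proof -
  have "ylit (bits vs ! k = 2) (gk vs k l) = gk vs (Suc k) l" for l
    using mt_Suc[OF k, of l] by (auto simp: ylit_def gk_def jupd_def min_def)
  then show ?thesis by (simp add: mapl_def ycl_def comp_def)
qed

lemma zlit_gk:
  "zlit (gk vs (length (bits vs)) l) = l\<lparr>lj := 0, lt := lt l \<or> lv l = vs, lc := False\<rparr>"
proof -
  have "(mt vs (length (bits vs)) l \<and> \<not> length (bits vs) < length (bits (lv l))) = (lv l = vs)"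
  proof
    assume a: "mt vs (length (bits vs)) l \<and> \<not> length (bits vs) < length (bits (lv l))"
    then have "length (bits (lv l)) = length (bits vs)" by (auto simp: mt_def)
    then have "bits (lv l) = bits vs" using a by (auto simp: mt_def)
    then show "lv l = vs" by (rule bits_inj)
  qed (auto simp: mt_def)
  moreover have "zlit (gk vs (length (bits vs)) l) = l\<lparr>lj := 0, lt := lt l \<or> (mt vs (length (bits vs)) l \<and>
      \<not> length (bits vs) < length (bits (lv l))), lc := False\<rparr>"
    unfolding zlit_def fu_gk by (simp add: gk_def)
  ultimately show ?thesis by simp
qed

lemma gk0: "lj l = 0 \<Longrightarrow> lc l \<Longrightarrow> gk vs 0 l = l"
  by (simp add: gk_def mt_def)

lemma RND_X: "RND (Cont (p0, UX q None None None), rep_tape A1 A2) =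
  ((case xr (A1 @ A2) of Some (Some b) \<Rightarrow> Cont (p0, UY q b) | _ \<Rightarrow> Cont (p0, UZ q)), rep_tape A1 A2)"
  by (simp add: RND_Cont atape_X)

lemma RND_Y: "RND (Cont (p0, UY q b), rep_tape A1 A2) = (Cont (p0, UX q None None None), rep_tape (map (ycl b) A1) (map (ycl b) A2))"
  by (simp add: RND_Cont atape_Y)

lemma RND_Z: "RND (Cont (p0, UZ q), rep_tape A1 A2) = (Cont (p0, find0 q), rep_tape (map zcl A1) (map zcl A2))"
  by (simp add: RND_Cont atape_Z)

lemma funpow_Suc_r: "(f ^^ Suc n) x = (f ^^ n) (f x)"
  by (simp only: funpow_Suc_right comp_def)

lemma compare_loop:
  assumes src: "srcl (T1 @ T2) = Some l0" and vs: "vs = lv l0"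
    and lt_pres: "\<forall>l. lp (gk vs k l) = lp l \<and> lt (gk vs k l) = lt l"
  shows "k \<le> length (bits vs) \<Longrightarrow> (RND ^^ (2 * (length (bits vs) - k) + 2))
     (Cont (p0, UX q None None None), rep_tape (mapl (gk vs k) T1) (mapl (gk vs k) T2)) =
     (Cont (p0, find0 q), rep_tape (map zcl (mapl (gk vs (length (bits vs))) T1)) (map zcl (mapl (gk vs (length (bits vs))) T2)))"
proof (induction "length (bits vs) - k" arbitrary: k)
  case 0
  then have k: "k = length (bits vs)" by simp
  have "srcl (mapl (gk vs k) T1 @ mapl (gk vs k) T2) = Some (gk vs k l0)"
    using srcl_mapl[of "gk vs k" "T1 @ T2"] src by (simp add: mapl_def gk_def)
  then have "xr (mapl (gk vs k) T1 @ mapl (gk vs k) T2) = Some None"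
    using srcl_xr fu_gk k vs by simp
  then show ?case using k by (simp add: RND_X RND_Z funpow_Suc_r del: funpow.simps)
next
  case (Suc m)
  then have k: "k < length (bits vs)" by simp
  have "srcl (mapl (gk vs k) T1 @ mapl (gk vs k) T2) = Some (gk vs k l0)"
    using srcl_mapl[of "gk vs k" "T1 @ T2"] src by (simp add: mapl_def gk_def)
  then have x: "xr (mapl (gk vs k) T1 @ mapl (gk vs k) T2) = Some (Some (bits vs ! k = 2))"
    using srcl_xr fu_gk k vs by simp
  have e: "2 * (length (bits vs) - k) + 2 = Suc (Suc (2 * (length (bits vs) - Suc k) + 2))" using k by simp
  have IH: "(RND ^^ (2 * (length (bits vs) - Suc k) + 2))
     (Cont (p0, UX q None None None), rep_tape (mapl (gk vs (Suc k)) T1) (mapl (gk vs (Suc k)) T2)) =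
     (Cont (p0, find0 q), rep_tape (map zcl (mapl (gk vs (length (bits vs))) T1)) (map zcl (mapl (gk vs (length (bits vs))) T2)))"
    using Suc.hyps(1)[of "Suc k"] Suc.hyps(2) k by simp
  show ?case unfolding e funpow_Suc_r using x IH by (simp add: RND_X RND_Y ycl_gk[OF k])
qed

definition Vof :: "acl list \<Rightarrow> acl list \<Rightarrow> nat set" where
  "Vof A1 A2 = lv ` set (alls A1 @ alls A2)"

lemma Vof_skel: "lv ` set (alls A) = fst ` set (concat (map fst (map skel A)))"
  by (force simp: alls_def skel_def image_iff)

lemma Vof_eq: "map skel B1 = map skel A1 \<Longrightarrow> map skel B2 = map skel A2 \<Longrightarrow> Vof B1 B2 = Vof A1 A2"
  unfolding Vof_def by (simp only: set_append image_Un Vof_skel)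

lemma finite_Vof: "finite (Vof A1 A2)" by (simp add: Vof_def)

lemma bitsN_skel: "map skel B1 = map skel A1 \<Longrightarrow> map skel B2 = map skel A2 \<Longrightarrow>
  (\<forall>l\<in>set (alls B1 @ alls B2). P (lv l)) = (\<forall>l\<in>set (alls A1 @ alls A2). P (lv l))"
proof -
  assume a: "map skel B1 = map skel A1" "map skel B2 = map skel A2"
  have e: "lv ` set (alls B1 @ alls B2) = lv ` set (alls A1 @ alls A2)" using Vof_eq[OF a] unfolding Vof_def .
  have "(\<forall>l\<in>set (alls B1 @ alls B2). P (lv l)) = (\<forall>v\<in>lv ` set (alls B1 @ alls B2). P v)" by blast
  also have "\<dots> = (\<forall>v\<in>lv ` set (alls A1 @ alls A2). P v)" using e by simp
  also have "\<dots> = (\<forall>l\<in>set (alls A1 @ alls A2). P (lv l))" by blast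
  finally show ?thesis .
qed

lemma RND_find: "RND (Cont (p0, find0 q), rep_tape A1 A2) =
  (let CONF = ((\<exists>c\<in>set A1. confl q False c) \<or> (\<exists>c\<in>set A2. confl q True c));
       FOUND = ((\<exists>c\<in>set A1. smc q False c \<noteq> None) \<or> (\<exists>c\<in>set A2. smc q True c \<noteq> None))
   in (if CONF then after q False else if FOUND then Cont (p0, UX q None None None) else after q True,
       rep_tape (map (findc q False) A1) (map (findc q True) A2)))"
  by (simp add: RND_Cont atape_find Let_def)

lemma skel_mapl: "\<forall>l. lv (f l) = lv l \<and> lp (f l) = lp l \<Longrightarrow> map skel (mapl f A) = map skel A"
  by (simp add: mapl_def skel_def comp_def)

lemma skel_zcl: "map skel (map zcl A) = map skel A"
  by (simp add: zcl_def skel_def comp_def zlit_def)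

lemma alls_findc: "l \<in> set (alls (map (findc q r) A)) \<longleftrightarrow> (\<exists>l'\<in>set (alls A). l = l'\<lparr>lc := True\<rparr>)"
  by (auto simp: alls_def findc_def)

lemma srcl_exists:
  assumes "\<forall>c\<in>set A. \<forall>pol. cs c = Some pol \<longrightarrow> (\<exists>l\<in>set (lits c). lp l = pol \<and> \<not> lt l)"
    and "\<exists>c\<in>set A. cs c \<noteq> None"
  shows "\<exists>c\<in>set A. \<exists>l\<in>set (lits c). srcl A = Some l \<and> cs c = Some (lp l) \<and> \<not> lt l"
  using assms
proof (induction A)
  case (Cons c A)
  show ?case
  proof (cases "cs c")
    case None
    then show ?thesis using Cons by auto
  next
    case (Some pol)
    then obtain l where l: "l \<in> set (lits c)" "lp l = pol" "\<not> lt l" using Cons.prems(1) by auto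
    have "find (\<lambda>l. lp l = pol \<and> \<not> lt l) (lits c) \<noteq> None"
      unfolding find_None_iff using l by blast
    then obtain l' where f: "find (\<lambda>l. lp l = pol \<and> \<not> lt l) (lits c) = Some l'" by blast
    then have l': "l' \<in> set (lits c)" "lp l' = pol" "\<not> lt l'"
      by (auto simp: find_Some_iff)
    have "srcl (c # A) = Some l'" using f Some by simp
    then show ?thesis using l' Some by auto
  qed
qed simp

lemma qmodS_forcedM:
  assumes "qmodS q (map skel A1) (map skel A2) I" and "PI q M A1 A2"
  shows "\<forall>v\<in>M. I v"
  using assms by (auto simp: PI_def)

lemma PI_lits: "PI q M A1 A2 \<Longrightarrow> c \<in> set A1 \<or> c \<in> set A2 \<Longrightarrow> \<forall>l\<in>set (lits c). lt l \<longleftrightarrow> lv l \<in> M"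
  by (auto simp: PI_def alls_def)

lemma find_conf:
  assumes pi: "PI q M A1 A2" and cf: "(\<exists>c\<in>set A1. confl q False c) \<or> (\<exists>c\<in>set A2. confl q True c)"
  shows "\<not> qsatS q (map skel A1) (map skel A2)"
proof
  assume "qsatS q (map skel A1) (map skel A2)"
  then obtain I where I: "qmodS q (map skel A1) (map skel A2) I" by (auto simp: qsatS_def)
  have f: "\<forall>v\<in>M. I v" using qmodS_forcedM[OF I pi] .
  from cf show False
  proof
    assume "\<exists>c\<in>set A1. confl q False c"
    then obtain c where c: "c \<in> set A1" "confl q False c" by blast
    have "smod q False I (skel c)" using I c by (auto simp: qmodS_def)
    then show False using confl_unsat[OF PI_lits[OF pi] f _ c(2)] c by blast
  next
    assume "\<exists>c\<in>set A2. confl q True c"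
    then obtain c where c: "c \<in> set A2" "confl q True c" by blast
    have "smod q True I (skel c)" using I c by (auto simp: qmodS_def)
    then show False using confl_unsat[OF PI_lits[OF pi] f _ c(2)] c by blast
  qed
qed

lemma find_sat:
  assumes pi: "PI q M A1 A2" and cf: "\<not> ((\<exists>c\<in>set A1. confl q False c) \<or> (\<exists>c\<in>set A2. confl q True c))"
    and fd: "\<not> ((\<exists>c\<in>set A1. smc q False c \<noteq> None) \<or> (\<exists>c\<in>set A2. smc q True c \<noteq> None))"
  shows "qsatS q (map skel A1) (map skel A2)"
proof -
  have "qmodS q (map skel A1) (map skel A2) (\<lambda>v. v \<in> M)"
    unfolding qmodS_def using nosrc_sat[OF PI_lits[OF pi]] cf fd by auto
  then show ?thesis by (auto simp: qsatS_def)
qed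

lemma alls_map_findc: "alls (map (findc q r) A) = map (\<lambda>l. l\<lparr>lc := True\<rparr>) (alls A)"
  by (induction A) (auto simp: alls_def findc_def)
lemma alls_mapl: "alls (mapl f A) = map f (alls A)"
  by (induction A) (auto simp: alls_def mapl_def)
lemma alls_zcl: "alls (map zcl A) = map zlit (alls A)"
  by (induction A) (auto simp: alls_def zcl_def)

lemma find_step:
  assumes pi: "PI q M A1 A2"
    and ncf: "\<not> ((\<exists>c\<in>set A1. confl q False c) \<or> (\<exists>c\<in>set A2. confl q True c))"
    and fd: "(\<exists>c\<in>set A1. smc q False c \<noteq> None) \<or> (\<exists>c\<in>set A2. smc q True c \<noteq> None)"
    and bN: "\<forall>l\<in>set (alls A1 @ alls A2). length (bits (lv l)) \<le> N"
  shows "\<exists>k \<le> 2 * N + 3. \<exists>vs B1 B2. (RND ^^ k) (Cont (p0, find0 q), rep_tape A1 A2) = (Cont (p0, find0 q), rep_tape B1 B2)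
     \<and> PI q (insert vs M) B1 B2 \<and> vs \<notin> M \<and> vs \<in> Vof A1 A2 \<and> map skel B1 = map skel A1 \<and> map skel B2 = map skel A2"
proof -
  define T1 where "T1 = map (findc q False) A1"
  define T2 where "T2 = map (findc q True) A2"
  have good: "\<forall>c\<in>set (T1 @ T2). \<forall>pol. cs c = Some pol \<longrightarrow> (\<exists>l\<in>set (lits c). lp l = pol \<and> \<not> lt l)"
  proof (intro ballI allI impI)
    fix c pol assume c: "c \<in> set (T1 @ T2)" and s: "cs c = Some pol"
    then obtain r c0 where c0: "c = findc q r c0" by (auto simp: T1_def T2_def)
    then have "smc q r c0 = Some pol" using s by (simp add: findc_def)
    then obtain l where l: "l \<in> set (lits c0)" "lp l = pol" "\<not> lt l" using smc_lit by blast
    have "l\<lparr>lc := True\<rparr> \<in> set (lits c)" using c0 l(1) by (simp add: findc_def)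
    then show "\<exists>l\<in>set (lits c). lp l = pol \<and> \<not> lt l" using l by (intro bexI[of _ "l\<lparr>lc := True\<rparr>"]) auto
  qed
  have ex: "\<exists>c\<in>set (T1 @ T2). cs c \<noteq> None"
  proof -
    from fd obtain r c where "c \<in> set (if r then A2 else A1)" "smc q r c \<noteq> None"
      by (metis (full_types))
    then have "findc q r c \<in> set (T1 @ T2)" "cs (findc q r c) \<noteq> None"
      by (cases r; auto simp: T1_def T2_def; simp add: findc_def)+
    then show ?thesis by blast
  qed
  obtain c l where c: "c \<in> set (T1 @ T2)" and l: "l \<in> set (lits c)" and sr: "srcl (T1 @ T2) = Some l"
    and cl: "cs c = Some (lp l)" and nlt: "\<not> lt l"
    using srcl_exists[OF good ex] by blast
  obtain r c0 where c0: "c = findc q r c0" and c0A: "c0 \<in> set (if r then A2 else A1)"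
    using c by (auto simp: T1_def T2_def)
  obtain l0 where l0: "l0 \<in> set (lits c0)" "l = l0\<lparr>lc := True\<rparr>" using l c0 by (auto simp: findc_def)
  have sm0: "smc q r c0 = Some (lp l0)" using cl c0 l0 by (simp add: findc_def)
  have nlt0: "\<not> lt l0" using nlt l0 by simp
  define vs where "vs = lv l0"
  have l0alls: "l0 \<in> set (alls A1 @ alls A2)" using l0 c0A by (auto simp: alls_def split: if_splits)
  have vsM: "vs \<notin> M" using pi l0alls nlt0 by (auto simp: PI_def vs_def)
  have vsV: "vs \<in> Vof A1 A2" using l0alls by (auto simp: Vof_def vs_def)
  have hc: "horn_clause (fst (skel c0))" using pi c0A by (auto simp: PI_def hornK_def split: if_splits)
  have forced: "\<forall>I. qmodS q (map skel A1) (map skel A2) I \<longrightarrow> I vs"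
  proof (intro allI impI)
    fix I assume I: "qmodS q (map skel A1) (map skel A2) I"
    have f: "\<forall>v\<in>M. I v" using qmodS_forcedM[OF I pi] .
    have sm: "smod q r I (skel c0)" using I c0A by (auto simp: qmodS_def split: if_splits)
    have lts: "\<forall>l\<in>set (lits c0). lt l \<longleftrightarrow> lv l \<in> M" using PI_lits[OF pi] c0A by (auto split: if_splits)
    show "I vs" using src_forced[OF lts f sm hc sm0 l0(1) refl nlt0] by (simp add: vs_def)
  qed
  define L where "L = length (bits vs)"
  have LN: "L \<le> N" using bN l0alls by (auto simp: L_def vs_def)
  have g0: "mapl (gk vs 0) T = T" if "T = map (findc q r') A" "\<forall>l\<in>set (alls A). lj l = 0" for T r' A
    using that by (auto simp: mapl_def findc_def gk0 alls_def intro!: map_idI)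
  have lj1: "\<forall>l\<in>set (alls A1). lj l = 0" and lj2: "\<forall>l\<in>set (alls A2). lj l = 0" using pi by (auto simp: PI_def)
  have pres: "\<forall>l. lp (gk vs 0 l) = lp l \<and> lt (gk vs 0 l) = lt l" by (simp add: gk_def)
  have srcv: "srcl (T1 @ T2) = Some l" "vs = lv l" using sr l0 by (auto simp: vs_def)
  have CL: "(RND ^^ (2 * (L - 0) + 2)) (Cont (p0, UX q None None None), rep_tape (mapl (gk vs 0) T1) (mapl (gk vs 0) T2)) =
     (Cont (p0, find0 q), rep_tape (map zcl (mapl (gk vs L) T1)) (map zcl (mapl (gk vs L) T2)))"
    using compare_loop[OF srcv pres] by (simp add: L_def)
  have CL': "(RND ^^ (2 * L + 2)) (Cont (p0, UX q None None None), rep_tape T1 T2) =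
     (Cont (p0, find0 q), rep_tape (map zcl (mapl (gk vs L) T1)) (map zcl (mapl (gk vs L) T2)))"
    using CL g0[OF T1_def lj1] g0[OF T2_def lj2] by simp
  have R1: "RND (Cont (p0, find0 q), rep_tape A1 A2) = (Cont (p0, UX q None None None), rep_tape T1 T2)"
    using ncf fd by (simp add: RND_find T1_def T2_def Let_def)
  define B1 where "B1 = map zcl (mapl (gk vs L) T1)"
  define B2 where "B2 = map zcl (mapl (gk vs L) T2)"
  have run: "(RND ^^ (Suc (2 * L + 2))) (Cont (p0, find0 q), rep_tape A1 A2) = (Cont (p0, find0 q), rep_tape B1 B2)"
    unfolding funpow_Suc_r R1 CL' B1_def B2_def ..
  have gpres: "\<forall>l. lv (gk vs L l) = lv l \<and> lp (gk vs L l) = lp l" by (simp add: gk_def)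
  have sk1: "map skel B1 = map skel A1" unfolding B1_def skel_zcl skel_mapl[OF gpres] T1_def by (simp add: comp_def)
  have sk2: "map skel B2 = map skel A2" unfolding B2_def skel_zcl skel_mapl[OF gpres] T2_def by (simp add: comp_def)
  have allsB: "alls B1 @ alls B2 = map (\<lambda>l. zlit (gk vs L (l\<lparr>lc := True\<rparr>))) (alls A1 @ alls A2)"
    by (simp add: B1_def B2_def T1_def T2_def alls_zcl alls_mapl alls_map_findc)
  have zl: "zlit (gk vs L (l\<lparr>lc := True\<rparr>)) = l\<lparr>lj := 0, lt := lt l \<or> lv l = vs, lc := False\<rparr>" for l
    using zlit_gk[of vs "l\<lparr>lc := True\<rparr>"] by (simp add: L_def)
  have PI': "PI q (insert vs M) B1 B2"
  proof -
    have a: "\<forall>l\<in>set (alls B1 @ alls B2). (lt l \<longleftrightarrow> lv l \<in> insert vs M) \<and> lj l = 0"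
      unfolding allsB using pi by (auto simp: zl PI_def)
    have b: "\<forall>v\<in>insert vs M. \<forall>I. qmodS q (map skel B1) (map skel B2) I \<longrightarrow> I v"
      unfolding sk1 sk2 using pi forced by (auto simp: PI_def)
    have c: "insert vs M \<subseteq> lv ` set (alls B1 @ alls B2)"
      using Vof_eq[OF sk1 sk2] vsV pi unfolding Vof_def PI_def by auto
    show ?thesis using a b c pi unfolding PI_def sk1 sk2 by blast
  qed
  have "Suc (2 * L + 2) \<le> 2 * N + 3" using LN by simp
  then show ?thesis using run PI' vsM vsV sk1 sk2 by blast
qed

lemma propagate:
  assumes bN: "\<forall>l\<in>set (alls A1 @ alls A2). length (bits (lv l)) \<le> N"
  shows "PI q M A1 A2 \<Longrightarrow> \<exists>k \<le> card (Vof A1 A2 - M) * (2 * N + 3) + 1. \<exists>B1 B2.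
    (RND ^^ k) (Cont (p0, find0 q), rep_tape A1 A2) = (after q (qsatS q (map skel A1) (map skel A2)), rep_tape B1 B2)
    \<and> map skel B1 = map skel A1 \<and> map skel B2 = map skel A2"
  using bN
proof (induction "card (Vof A1 A2 - M)" arbitrary: M A1 A2 rule: less_induct)
  case less
  let ?CONF = "(\<exists>c\<in>set A1. confl q False c) \<or> (\<exists>c\<in>set A2. confl q True c)"
  let ?FOUND = "(\<exists>c\<in>set A1. smc q False c \<noteq> None) \<or> (\<exists>c\<in>set A2. smc q True c \<noteq> None)"
  have sk: "map skel (map (findc q r) A) = map skel A" for r A by (simp add: comp_def)
  show ?case
  proof (cases "?CONF")
    case True
    have "\<not> qsatS q (map skel A1) (map skel A2)" using find_conf[OF less.prems(1) True] .
    then have "RND (Cont (p0, find0 q), rep_tape A1 A2) = (after q (qsatS q (map skel A1) (map skel A2)),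
        rep_tape (map (findc q False) A1) (map (findc q True) A2))" (is ?X) using True by (simp add: RND_find Let_def)
    have "\<exists>B1 B2. (RND ^^ 1) (Cont (p0, find0 q), rep_tape A1 A2) = (after q (qsatS q (map skel A1) (map skel A2)), rep_tape B1 B2)
      \<and> map skel B1 = map skel A1 \<and> map skel B2 = map skel A2"
      by (rule exI[of _ "map (findc q False) A1"], rule exI[of _ "map (findc q True) A2"]) (simp add: sk \<open>?X\<close>)
    then show ?thesis by (intro exI[of _ 1]) auto
  next
    case False
    note ncf = False
    show ?thesis
    proof (cases "?FOUND")
      case False
      have "qsatS q (map skel A1) (map skel A2)" using find_sat[OF less.prems(1) ncf False] .
      then have "RND (Cont (p0, find0 q), rep_tape A1 A2) = (after q (qsatS q (map skel A1) (map skel A2)),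
          rep_tape (map (findc q False) A1) (map (findc q True) A2))" (is ?X) using ncf False by (simp add: RND_find Let_def)
      have "\<exists>B1 B2. (RND ^^ 1) (Cont (p0, find0 q), rep_tape A1 A2) = (after q (qsatS q (map skel A1) (map skel A2)), rep_tape B1 B2)
        \<and> map skel B1 = map skel A1 \<and> map skel B2 = map skel A2"
      by (rule exI[of _ "map (findc q False) A1"], rule exI[of _ "map (findc q True) A2"]) (simp add: sk \<open>?X\<close>)
      then show ?thesis by (intro exI[of _ 1]) auto
    next
      case True
      obtain k vs B1 B2 where k: "k \<le> 2 * N + 3" and run: "(RND ^^ k) (Cont (p0, find0 q), rep_tape A1 A2) = (Cont (p0, find0 q), rep_tape B1 B2)"
        and PI': "PI q (insert vs M) B1 B2" and vsM: "vs \<notin> M" and vsV: "vs \<in> Vof A1 A2"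
        and sk1: "map skel B1 = map skel A1" and sk2: "map skel B2 = map skel A2"
        using find_step[OF less.prems(1) ncf True less.prems(2)] by blast
      have V: "Vof B1 B2 = Vof A1 A2" using Vof_eq[OF sk1 sk2] .
      have lt: "card (Vof B1 B2 - insert vs M) < card (Vof A1 A2 - M)"
      proof -
        have e: "Vof A1 A2 - insert vs M = (Vof A1 A2 - M) - {vs}" by blast
        have "vs \<in> Vof A1 A2 - M" using vsM vsV by blast
        then show ?thesis unfolding V e by (intro card_Diff1_less) (simp add: finite_Vof)
      qed
      have bN': "\<forall>l\<in>set (alls B1 @ alls B2). length (bits (lv l)) \<le> N"
        using bitsN_skel[OF sk1 sk2, of "\<lambda>v. length (bits v) \<le> N"] less.prems(2) by blast
      obtain k' C1 C2 where k': "k' \<le> card (Vof B1 B2 - insert vs M) * (2 * N + 3) + 1"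
        and run': "(RND ^^ k') (Cont (p0, find0 q), rep_tape B1 B2) = (after q (qsatS q (map skel B1) (map skel B2)), rep_tape C1 C2)"
        and skC: "map skel C1 = map skel B1" "map skel C2 = map skel B2"
        using less.hyps[OF lt PI' bN'] by blast
      have "(RND ^^ (k' + k)) (Cont (p0, find0 q), rep_tape A1 A2) = (after q (qsatS q (map skel A1) (map skel A2)), rep_tape C1 C2)"
        using run run' sk1 sk2 by (simp add: funpow_add)
      moreover have "k' + k \<le> card (Vof A1 A2 - M) * (2 * N + 3) + 1"
      proof -
        have "Suc (card (Vof B1 B2 - insert vs M)) \<le> card (Vof A1 A2 - M)" using lt by simp
        then have "(card (Vof B1 B2 - insert vs M) + 1) * (2 * N + 3) \<le> card (Vof A1 A2 - M) * (2 * N + 3)"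
          by (intro mult_right_mono) auto
        then show ?thesis using k k' by (simp add: algebra_simps)
      qed
      ultimately show ?thesis using skC sk1 sk2
        by (intro exI[of _ "k' + k"] conjI exI[of _ C1] exI[of _ C2]) auto
    qed
  qed
qed

definition ers :: "acl list \<Rightarrow> formula" where
  "ers A = map (\<lambda>c. map (\<lambda>l. (lv l, lp l)) (lits c)) A"

lemma skel_zip: "map skel A = zip (ers A) (map csel A)"
  by (induction A) (auto simp: skel_def ers_def)

lemma hornK_ers: "hornK (map skel A) = horn (ers A)"
  by (auto simp: hornK_def horn_def ers_def skel_def)

definition selv :: "nat \<Rightarrow> nat \<Rightarrow> bool list" where
  "selv n i = map (\<lambda>k. k = i) [0..<n]"

lemma length_selv[simp]: "length (selv n i) = n" by (simp add: selv_def)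

lemma length_sel_run[simp]: "length (sel_run isN pv ss) = length ss"
  by (induction ss arbitrary: pv) auto

lemma nth_sel_run: "k < length ss \<Longrightarrow> sel_run isN pv ss ! k = (if k = 0 then pv else isN \<and> ss ! (k - 1))"
  by (induction ss arbitrary: pv k) (auto simp: nth_Cons split: nat.split)

lemma sel_run_init: "sel_run False True ss = selv (length ss) 0"
  by (rule nth_equalityI) (auto simp: nth_sel_run selv_def)

lemma sel_run_next: "sel_run True False (selv n i) = selv n (Suc i)"
  by (rule nth_equalityI) (auto simp: nth_sel_run selv_def)

lemma True_selv: "True \<in> set (selv n i) \<longleftrightarrow> i < n"
  by (auto simp: selv_def)

lemma ers_setsel: "ers (setsel A S) = ers A"
  by (induction A S rule: setsel.induct) (auto simp: ers_def)

lemma ers_ccl: "ers (map ccl A) = ers A"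
  by (simp add: ers_def ccl_def clit_def comp_def)

lemma csel_setsel: "length S = length A \<Longrightarrow> map csel (setsel A S) = S"
  by (induction A S rule: setsel.induct) auto

lemma csel_ccl: "map csel (map ccl A) = map csel A"
  by (simp add: ccl_def comp_def)

lemma alls_setsel: "alls (setsel A S) = alls A"
  by (induction A S rule: setsel.induct) (auto simp: alls_def)

lemma alls_ccl: "alls (map ccl A) = map clit (alls A)"
  by (induction A) (auto simp: alls_def ccl_def)

lemma RND_sel:
  "RND (Cont (p0, USel isN rt q False pv), rep_tape A1 A2) =
   (let SS = sel_run isN pv (map csel (if rt then A2 else A1)) in
    (if True \<in> set SS then onfound rt q else exhausted rt q,
     rep_tape (if rt then map ccl A1 else setsel (map ccl A1) SS)
              (if rt then setsel (map ccl A2) SS else map ccl A2)))"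
proof -
  obtain pv' where "atape BM LF CF FF (USel isN rt q False pv) A1 A2 =
    (USel isN rt q (False \<or> True \<in> set (sel_run isN pv (map csel (if rt then A2 else A1)))) pv',
     if rt then map ccl A1 else setsel (map ccl A1) (sel_run isN pv (map csel A1)),
     if rt then setsel (map ccl A2) (sel_run isN pv (map csel A2)) else map ccl A2)"
    using atape_Sel by blast
  then show ?thesis by (simp add: RND_Cont Let_def split: if_splits)
qed

lemma PI_clean:
  assumes "\<forall>l\<in>set (alls B1 @ alls B2). \<not> lt l \<and> lj l = 0" "horn (ers B1)" "horn (ers B2)"
  shows "PI q {} B1 B2"
  using assms by (auto simp: PI_def hornK_ers)

lemma clean_sel:
  "\<forall>l\<in>set (alls (if rt then map ccl A1 else setsel (map ccl A1) S) @ alls (if rt then setsel (map ccl A2) S else map ccl A2)).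
     \<not> lt l \<and> lj l = 0"
  by (auto simp: alls_setsel alls_ccl clit_def)

lemma length_rep_lits: "length (rep_lits pf ls sel s) = Suc (sum_list (map (\<lambda>l. Suc (length (bits (lv l)))) ls))"
proof (induction ls arbitrary: pf)
  case (Cons l ls)
  have "length (bitcells j ss) = length ss" for j ss by (induction ss arbitrary: j) auto
  then show ?case using Cons by simp
qed simp

definition csize :: "clause \<Rightarrow> nat" where
  "csize c = Suc (sum_list (map (\<lambda>l. Suc (length (bits (fst l)))) c))"

lemma length_rep_clause: "length (rep_clause c) = csize (map (\<lambda>l. (lv l, lp l)) (lits c))"
  by (simp add: rep_clause_def length_rep_lits csize_def comp_def)

lemma length_rep_tape: "length (rep_tape A1 A2) = sum_list (map csize (ers A1)) + sum_list (map csize (ers A2)) + 2"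
proof -
  have "length (concat (map rep_clause A)) = sum_list (map csize (ers A))" for A
    by (induction A) (auto simp: length_rep_clause ers_def)
  then show ?thesis by (simp add: rep_tape_def rep_form_def)
qed

lemma bits_le_csize: "l \<in> set c \<Longrightarrow> length (bits (fst l)) < csize c"
proof (induction c)
  case (Cons a c)
  then show ?case by (auto simp: csize_def)
qed simp

lemma member_le_sum_list: "x \<in> set xs \<Longrightarrow> (x::nat) \<le> sum_list xs"
  by (induction xs) auto

lemma bits_le_1: "l \<in> set (alls A) \<Longrightarrow> length (bits (lv l)) \<le> sum_list (map csize (ers A))"
proof (induction A)
  case (Cons c A)
  show ?case
  proof (cases "l \<in> set (lits c)")
    case True
    have "(lv l, lp l) \<in> set (map (\<lambda>l. (lv l, lp l)) (lits c))" using True by auto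
    then have "length (bits (lv l)) < csize (map (\<lambda>l. (lv l, lp l)) (lits c))" using bits_le_csize by fastforce
    then show ?thesis by (simp add: ers_def)
  next
    case False
    then have "l \<in> set (alls A)" using Cons.prems by (simp add: alls_def)
    then show ?thesis using Cons.IH by (simp add: ers_def)
  qed
qed (simp add: alls_def)

lemma bits_le_N:
  "\<forall>l\<in>set (alls A1 @ alls A2). length (bits (lv l)) \<le> length (rep_tape A1 A2)"
  using bits_le_1[of _ A1] bits_le_1[of _ A2] unfolding length_rep_tape by fastforce

lemma length_le_csize: "length c < csize c"
  by (induction c) (auto simp: csize_def)

lemma card_Vof_le: "card (Vof A1 A2) \<le> length (rep_tape A1 A2)"
proof -
  have "card (Vof A1 A2) \<le> length (alls A1 @ alls A2)"
    unfolding Vof_def by (rule order_trans[OF card_image_le[OF finite_set] card_length])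
  moreover have la: "length (alls A) \<le> sum_list (map csize (ers A))" for A
  proof (induction A)
    case (Cons c A)
    have "length (lits c) \<le> csize (map (\<lambda>l. (lv l, lp l)) (lits c))" using length_le_csize[of "map (\<lambda>l. (lv l, lp l)) (lits c)"] by simp
    then show ?case using Cons by (simp add: alls_def ers_def)
  qed (simp add: alls_def ers_def)
  ultimately have a: "card (Vof A1 A2) \<le> length (alls A1) + length (alls A2)" by simp
  have b: "length (alls A1) \<le> sum_list (map csize (ers A1))" "length (alls A2) \<le> sum_list (map csize (ers A2))"
    using la by blast+
  show ?thesis unfolding length_rep_tape using a b by linarith
qed

lemma length_rep_tape_ers: "ers B1 = ers A1 \<Longrightarrow> ers B2 = ers A2 \<Longrightarrow> length (rep_tape B1 B2) = length (rep_tape A1 A2)"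
  by (simp add: length_rep_tape)

definition PB :: "nat \<Rightarrow> nat" where "PB N = N * (2 * N + 3) + 1"

lemma propagate0:
  assumes "PI q {} A1 A2"
  shows "\<exists>k \<le> PB (length (rep_tape A1 A2)). \<exists>B1 B2.
    (RND ^^ k) (Cont (p0, find0 q), rep_tape A1 A2) = (after q (qsatS q (map skel A1) (map skel A2)), rep_tape B1 B2)
    \<and> map skel B1 = map skel A1 \<and> map skel B2 = map skel A2"
proof -
  obtain k B1 B2 where k: "k \<le> card (Vof A1 A2 - {}) * (2 * length (rep_tape A1 A2) + 3) + 1"
    and r: "(RND ^^ k) (Cont (p0, find0 q), rep_tape A1 A2) = (after q (qsatS q (map skel A1) (map skel A2)), rep_tape B1 B2)
    \<and> map skel B1 = map skel A1 \<and> map skel B2 = map skel A2"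
    using propagate[OF bits_le_N assms] by blast
  have "k \<le> PB (length (rep_tape A1 A2))"
  proof -
    have "card (Vof A1 A2 - {}) * (2 * length (rep_tape A1 A2) + 3) \<le> length (rep_tape A1 A2) * (2 * length (rep_tape A1 A2) + 3)"
      using card_Vof_le[of A1 A2] by (intro mult_right_mono) auto
    then show ?thesis using k unfolding PB_def by linarith
  qed
  then show ?thesis using r by blast
qed

lemma skel_eqD: "map skel C = map skel A \<Longrightarrow> ers C = ers A \<and> map csel C = map csel A"
proof -
  assume a: "map skel C = map skel A"
  have "ers X = map (fst \<circ> skel) X" "map csel X = map (snd \<circ> skel) X" for X
    by (auto simp: ers_def skel_def)
  then show ?thesis using a by (metis map_map)
qed

lemma length_ers: "length (ers A) = length A" by (simp add: ers_def)

definition NN :: "formula \<Rightarrow> formula \<Rightarrow> nat" where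
  "NN E1 E2 = sum_list (map csize E1) + sum_list (map csize E2) + 2"

lemma NN_len: "ers A1 = E1 \<Longrightarrow> ers A2 = E2 \<Longrightarrow> length (rep_tape A1 A2) = NN E1 E2"
  by (simp add: length_rep_tape NN_def)

definition SATj :: "qid \<Rightarrow> bool \<Rightarrow> formula \<Rightarrow> formula \<Rightarrow> bool list \<Rightarrow> nat \<Rightarrow> bool" where
  "SATj q rt E1 E2 So j = (let L = length (if rt then E2 else E1) in
     qsatS q (zip E1 (if rt then So else selv L j)) (zip E2 (if rt then selv L j else So)))"

lemma sel_step:
  assumes e: "ers C1 = E1" "ers C2 = E2" and h: "horn E1" "horn E2"
    and L: "L = length (if rt then E2 else E1)"
    and s: "map csel (if rt then C2 else C1) = S" "length S = L"
    and so: "map csel (if rt then C1 else C2) = So"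
  shows "\<exists>D1 D2. RND (Cont (p0, USel isN rt q False pv), rep_tape C1 C2) =
      (if True \<in> set (sel_run isN pv S) then onfound rt q else exhausted rt q, rep_tape D1 D2)
    \<and> ers D1 = E1 \<and> ers D2 = E2 \<and> map csel (if rt then D2 else D1) = sel_run isN pv S
    \<and> map csel (if rt then D1 else D2) = So \<and> PI q' {} D1 D2"
proof -
  let ?SS = "sel_run isN pv S"
  let ?D1 = "if rt then map ccl C1 else setsel (map ccl C1) ?SS"
  let ?D2 = "if rt then setsel (map ccl C2) ?SS else map ccl C2"
  have len: "length ?SS = length (if rt then C2 else C1)" using s L e by (auto simp: length_ers[symmetric])
  have r: "RND (Cont (p0, USel isN rt q False pv), rep_tape C1 C2) =
      (if True \<in> set ?SS then onfound rt q else exhausted rt q, rep_tape ?D1 ?D2)"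
    using s by (simp add: RND_sel Let_def split: if_splits)
  have e': "ers ?D1 = E1" "ers ?D2 = E2" using e by (auto simp: ers_setsel ers_ccl)
  have cs: "map csel (if rt then ?D2 else ?D1) = ?SS" "map csel (if rt then ?D1 else ?D2) = So"
    using len so by (auto simp: csel_setsel csel_ccl ccl_def)
  have pi: "PI q' {} ?D1 ?D2" using PI_clean[OF clean_sel] e' h by simp
  show ?thesis using r e' cs pi by blast
qed

lemma loop:
  assumes q: "after q True = SS" "after q False = nextS rt q" "onfound rt q = Cont (p0, find0 q)" "exhausted rt q = SE"
    and h: "horn E1" "horn E2" and L: "L = length (if rt then E2 else E1)"
  shows "i < L \<Longrightarrow> ers A1 = E1 \<Longrightarrow> ers A2 = E2 \<Longrightarrow> map csel (if rt then A2 else A1) = selv L i \<Longrightarrow>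
    map csel (if rt then A1 else A2) = So \<Longrightarrow> PI q {} A1 A2 \<Longrightarrow>
    \<exists>k \<le> (L - i) * (PB (NN E1 E2) + 1). \<exists>B1 B2. (RND ^^ k) (Cont (p0, find0 q), rep_tape A1 A2) =
      (if \<exists>j\<in>{i..<L}. SATj q rt E1 E2 So j then SS else SE, rep_tape B1 B2)
      \<and> ers B1 = E1 \<and> ers B2 = E2 \<and> map csel (if rt then B1 else B2) = So"
proof (induction "L - i" arbitrary: i A1 A2)
  case 0 then show ?case by simp
next
  case (Suc m)
  have N: "length (rep_tape A1 A2) = NN E1 E2" using NN_len Suc.prems by blast
  obtain k1 C1 C2 where k1: "k1 \<le> PB (NN E1 E2)"
    and r1: "(RND ^^ k1) (Cont (p0, find0 q), rep_tape A1 A2) = (after q (qsatS q (map skel A1) (map skel A2)), rep_tape C1 C2)"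
    and sk: "map skel C1 = map skel A1" "map skel C2 = map skel A2"
    using propagate0[OF Suc.prems(6)] N by auto
  have cC: "ers C1 = E1" "ers C2 = E2" "map csel C1 = map csel A1" "map csel C2 = map csel A2"
    using skel_eqD[OF sk(1)] skel_eqD[OF sk(2)] Suc.prems by auto
  have sat: "qsatS q (map skel A1) (map skel A2) = SATj q rt E1 E2 So i"
    using Suc.prems L by (auto simp: skel_zip SATj_def Let_def)
  show ?case
  proof (cases "SATj q rt E1 E2 So i")
    case True
    have "PB (NN E1 E2) + 1 \<le> (L - i) * (PB (NN E1 E2) + 1)"
      using mult_le_mono1[of 1 "L - i" "PB (NN E1 E2) + 1"] Suc.hyps(2) by simp
    then have "k1 \<le> (L - i) * (PB (NN E1 E2) + 1)" using k1 by linarith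
    moreover have "(\<exists>j\<in>{i..<L}. SATj q rt E1 E2 So j)" using True Suc.prems(1) by auto
    moreover have "map csel (if rt then C1 else C2) = So" using cC Suc.prems by auto
    ultimately show ?thesis using r1 sat True q(1) cC
      by (intro exI[of _ k1] conjI exI[of _ C1] exI[of _ C2]) auto
  next
    case False
    have r1': "(RND ^^ k1) (Cont (p0, find0 q), rep_tape A1 A2) = (Cont (p0, USel True rt q False False), rep_tape C1 C2)"
      using r1 sat False q(2) by (simp add: nextS_def)
    have sC: "map csel (if rt then C2 else C1) = selv L i" "map csel (if rt then C1 else C2) = So"
      using cC Suc.prems by auto
    obtain D1 D2 where r2: "RND (Cont (p0, USel True rt q False False), rep_tape C1 C2) =
      (if True \<in> set (selv L (Suc i)) then onfound rt q else exhausted rt q, rep_tape D1 D2)"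
      and eD: "ers D1 = E1" "ers D2 = E2" and sD: "map csel (if rt then D2 else D1) = selv L (Suc i)"
      "map csel (if rt then D1 else D2) = So" and piD: "PI q {} D1 D2"
      using sel_step[OF cC(1,2) h L sC(1) _ sC(2), where isN=True and pv=False and q=q and q'=q] by (auto simp: sel_run_next)
    have run2: "(RND ^^ Suc k1) (Cont (p0, find0 q), rep_tape A1 A2) =
      (if Suc i < L then Cont (p0, find0 q) else SE, rep_tape D1 D2)"
      using r1' r2 q(3,4) by (simp add: True_selv)
    show ?thesis
    proof (cases "Suc i < L")
      case True
      obtain k2 B1 B2 where k2: "k2 \<le> (L - Suc i) * (PB (NN E1 E2) + 1)"
        and r3: "(RND ^^ k2) (Cont (p0, find0 q), rep_tape D1 D2) =
          (if \<exists>j\<in>{Suc i..<L}. SATj q rt E1 E2 So j then SS else SE, rep_tape B1 B2)"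
        and eB: "ers B1 = E1 \<and> ers B2 = E2 \<and> map csel (if rt then B1 else B2) = So"
      proof -
        have m: "m = L - Suc i" using Suc.hyps(2) by simp
        show ?thesis using Suc.hyps(1)[OF m True eD(1) eD(2) sD(1) sD(2) piD] that by blast
      qed
      have ex: "(\<exists>j\<in>{Suc i..<L}. SATj q rt E1 E2 So j) = (\<exists>j\<in>{i..<L}. SATj q rt E1 E2 So j)"
      proof
        assume "\<exists>j\<in>{Suc i..<L}. SATj q rt E1 E2 So j" then show "\<exists>j\<in>{i..<L}. SATj q rt E1 E2 So j" by auto
      next
        assume "\<exists>j\<in>{i..<L}. SATj q rt E1 E2 So j"
        then obtain j where j: "j \<in> {i..<L}" "SATj q rt E1 E2 So j" by blast
        then have "j \<noteq> i" using False by auto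
        then show "\<exists>j\<in>{Suc i..<L}. SATj q rt E1 E2 So j" using j by (intro bexI[of _ j]) auto
      qed
      have "(RND ^^ (k2 + Suc k1)) (Cont (p0, find0 q), rep_tape A1 A2) =
          (if \<exists>j\<in>{i..<L}. SATj q rt E1 E2 So j then SS else SE, rep_tape B1 B2)"
      proof -
        have "(RND ^^ (k2 + Suc k1)) (Cont (p0, find0 q), rep_tape A1 A2) =
          (RND ^^ k2) ((RND ^^ Suc k1) (Cont (p0, find0 q), rep_tape A1 A2))" by (simp only: funpow_add comp_def)
        also have "\<dots> = (RND ^^ k2) (Cont (p0, find0 q), rep_tape D1 D2)" using run2 True by simp
        finally show ?thesis using r3 ex by simp
      qed
      moreover have "k2 + Suc k1 \<le> (L - i) * (PB (NN E1 E2) + 1)"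
      proof -
        have "L - i = Suc (L - Suc i)" using True by simp
        then show ?thesis using k1 k2 by (simp add: algebra_simps)
      qed
      ultimately show ?thesis using eB by blast
    next
      case False
      then have Li: "L = Suc i" using Suc.prems(1) by simp
      have ex: "\<not> (\<exists>j\<in>{i..<L}. SATj q rt E1 E2 So j)" using \<open>\<not> SATj q rt E1 E2 So i\<close> Li by auto
      have "(RND ^^ Suc k1) (Cont (p0, find0 q), rep_tape A1 A2) =
          (if \<exists>j\<in>{i..<L}. SATj q rt E1 E2 So j then SS else SE, rep_tape D1 D2)"
        using run2 False ex by simp
      moreover have "Suc k1 \<le> (L - i) * (PB (NN E1 E2) + 1)" using k1 Li by simp
      ultimately show ?thesis using eD sD by blast
    qed
  qed
qed

lemma loop_init:
  assumes q: "after q True = SS" "after q False = nextS rt q" "onfound rt q = Cont (p0, find0 q)" "exhausted rt q = SE"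
    and h: "horn E1" "horn E2" and L: "L = length (if rt then E2 else E1)"
    and e: "ers A1 = E1" "ers A2 = E2" and so: "map csel (if rt then A1 else A2) = So"
  shows "\<exists>k \<le> (L + 1) * (PB (NN E1 E2) + 1). \<exists>B1 B2. (RND ^^ k) (initS rt q, rep_tape A1 A2) =
      (if \<exists>j<L. SATj q rt E1 E2 So j then SS else SE, rep_tape B1 B2)
      \<and> ers B1 = E1 \<and> ers B2 = E2 \<and> map csel (if rt then B1 else B2) = So"
proof -
  have lenS: "length (map csel (if rt then A2 else A1)) = L" using L e by (auto simp: length_ers[symmetric])
  obtain D1 D2 where r1: "RND (Cont (p0, USel False rt q False True), rep_tape A1 A2) =
      (if True \<in> set (sel_run False True (map csel (if rt then A2 else A1))) then onfound rt q else exhausted rt q, rep_tape D1 D2)"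
    and eD: "ers D1 = E1" "ers D2 = E2" and sD: "map csel (if rt then D2 else D1) = sel_run False True (map csel (if rt then A2 else A1))"
      "map csel (if rt then D1 else D2) = So" and piD: "PI q {} D1 D2"
    using sel_step[OF e h L refl lenS so, where isN=False and pv=True and q=q and q'=q] by blast
  have ss: "sel_run False True (map csel (if rt then A2 else A1)) = selv L 0" using sel_run_init lenS by metis
  show ?thesis
  proof (cases "0 < L")
    case True
    have r1': "RND (initS rt q, rep_tape A1 A2) = (Cont (p0, find0 q), rep_tape D1 D2)"
      using r1 ss True q(3) by (simp add: initS_def True_selv)
    obtain k B1 B2 where k: "k \<le> (L - 0) * (PB (NN E1 E2) + 1)" and
      r2: "(RND ^^ k) (Cont (p0, find0 q), rep_tape D1 D2) = (if \<exists>j\<in>{0..<L}. SATj q rt E1 E2 So j then SS else SE, rep_tape B1 B2)"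
      and eB: "ers B1 = E1 \<and> ers B2 = E2 \<and> map csel (if rt then B1 else B2) = So"
      using loop[OF q h L True eD sD(1)[unfolded ss] sD(2) piD] by blast
    have ex: "(\<exists>j\<in>{0..<L}. SATj q rt E1 E2 So j) = (\<exists>j<L. SATj q rt E1 E2 So j)" by auto
    have "(RND ^^ (k + 1)) (initS rt q, rep_tape A1 A2) = (if \<exists>j<L. SATj q rt E1 E2 So j then SS else SE, rep_tape B1 B2)"
    proof -
      have "(RND ^^ (k + 1)) (initS rt q, rep_tape A1 A2) = (RND ^^ k) (RND (initS rt q, rep_tape A1 A2))"
        using funpow_Suc_r[where f=RND and n=k] by simp
      then show ?thesis using r1' r2 ex by simp
    qed
    moreover have "k + 1 \<le> (L + 1) * (PB (NN E1 E2) + 1)" using k by (simp add: algebra_simps)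
    ultimately show ?thesis using eB by blast
  next
    case False
    then have "(RND ^^ 1) (initS rt q, rep_tape A1 A2) = (if \<exists>j<L. SATj q rt E1 E2 So j then SS else SE, rep_tape D1 D2)"
      using r1 ss q(4) by (simp add: initS_def True_selv)
    moreover have "1 \<le> (L + 1) * (PB (NN E1 E2) + 1)" by simp
    ultimately show ?thesis using eD sD(2) by blast
  qed
qed

definition SAT2b :: "formula \<Rightarrow> formula \<Rightarrow> nat \<Rightarrow> nat \<Rightarrow> bool" where
  "SAT2b E1 E2 i j = SATj Q2b True E1 E2 (selv (length E1) i) j"

lemma outer_loop:
  assumes h: "horn E1" "horn E2" and L1: "L1 = length E1" and L2: "L2 = length E2"
  shows "i < L1 \<Longrightarrow> ers A1 = E1 \<Longrightarrow> ers A2 = E2 \<Longrightarrow> map csel A1 = selv L1 i \<Longrightarrow>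
    \<exists>k \<le> (L1 - i) * ((L2 + 1) * (PB (NN E1 E2) + 1) + 1). \<exists>B1 B2. (RND ^^ k) (initS True Q2b, rep_tape A1 A2) =
      (if \<exists>i'\<in>{i..<L1}. \<exists>j<L2. SAT2b E1 E2 i' j then Rej else Acc, rep_tape B1 B2)"
proof (induction "L1 - i" arbitrary: i A1 A2)
  case 0 then show ?case by simp
next
  case (Suc m)
  obtain k1 C1 C2 where k1: "k1 \<le> (L2 + 1) * (PB (NN E1 E2) + 1)"
    and r1: "(RND ^^ k1) (initS True Q2b, rep_tape A1 A2) =
      (if \<exists>j<L2. SATj Q2b True E1 E2 (selv L1 i) j then Rej else nextS False Q2b, rep_tape C1 C2)"
    and eC: "ers C1 = E1" "ers C2 = E2" "map csel C1 = selv L1 i"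
    using loop_init[where q=Q2b and rt=True and SS=Rej and SE="nextS False Q2b", OF _ _ _ _ h _ Suc.prems(2,3), of L2 "selv L1 i"]
      L2 Suc.prems(4) by (auto simp: nextS_def)
  have bnd1: "(L2 + 1) * (PB (NN E1 E2) + 1) + 1 \<le> (L1 - i) * ((L2 + 1) * (PB (NN E1 E2) + 1) + 1)"
    using mult_le_mono1[of 1 "L1 - i" "(L2 + 1) * (PB (NN E1 E2) + 1) + 1"] Suc.hyps(2) by simp
  show ?case
  proof (cases "\<exists>j<L2. SATj Q2b True E1 E2 (selv L1 i) j")
    case True
    then have "\<exists>i'\<in>{i..<L1}. \<exists>j<L2. SAT2b E1 E2 i' j" using Suc.prems(1) L1 by (auto simp: SAT2b_def)
    then show ?thesis using r1 True k1 bnd1 by (intro exI[of _ k1]) auto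
  next
    case False
    have sC: "map csel (if False then C2 else C1) = selv L1 i" "map csel (if False then C1 else C2) = map csel C2"
      using eC by auto
    obtain D1 D2 where r2: "RND (Cont (p0, USel True False Q2b False False), rep_tape C1 C2) =
      (if True \<in> set (sel_run True False (selv L1 i)) then onfound False Q2b else exhausted False Q2b, rep_tape D1 D2)"
      and eD: "ers D1 = E1" "ers D2 = E2" and sD: "map csel (if False then D2 else D1) = sel_run True False (selv L1 i)"
      using sel_step[OF eC(1,2) h _ sC(1) _ sC(2), where isN=True and pv=False and q=Q2b and q'=Q2b] L1 by auto
    have run2: "(RND ^^ Suc k1) (initS True Q2b, rep_tape A1 A2) =
      (if Suc i < L1 then initS True Q2b else Acc, rep_tape D1 D2)"
      using r1 False r2 by (simp add: nextS_def sel_run_next True_selv)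
    have sD': "map csel D1 = selv L1 (Suc i)" using sD by (simp add: sel_run_next)
    show ?thesis
    proof (cases "Suc i < L1")
      case True
      have m: "m = L1 - Suc i" using Suc.hyps(2) by simp
      obtain k2 B1 B2 where k2: "k2 \<le> (L1 - Suc i) * ((L2 + 1) * (PB (NN E1 E2) + 1) + 1)"
        and r3: "(RND ^^ k2) (initS True Q2b, rep_tape D1 D2) =
          (if \<exists>i'\<in>{Suc i..<L1}. \<exists>j<L2. SAT2b E1 E2 i' j then Rej else Acc, rep_tape B1 B2)"
        using Suc.hyps(1)[OF m True eD sD'] by blast
      have ex: "(\<exists>i'\<in>{Suc i..<L1}. \<exists>j<L2. SAT2b E1 E2 i' j) = (\<exists>i'\<in>{i..<L1}. \<exists>j<L2. SAT2b E1 E2 i' j)"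
      proof
        assume "\<exists>i'\<in>{Suc i..<L1}. \<exists>j<L2. SAT2b E1 E2 i' j" then show "\<exists>i'\<in>{i..<L1}. \<exists>j<L2. SAT2b E1 E2 i' j" by auto
      next
        assume "\<exists>i'\<in>{i..<L1}. \<exists>j<L2. SAT2b E1 E2 i' j"
        then obtain i' where j: "i' \<in> {i..<L1}" "\<exists>j<L2. SAT2b E1 E2 i' j" by blast
        then have "i' \<noteq> i" using False L1 by (auto simp: SAT2b_def)
        then show "\<exists>i'\<in>{Suc i..<L1}. \<exists>j<L2. SAT2b E1 E2 i' j" using j by (intro bexI[of _ i']) auto
      qed
      have "(RND ^^ (k2 + Suc k1)) (initS True Q2b, rep_tape A1 A2) =
          (if \<exists>i'\<in>{i..<L1}. \<exists>j<L2. SAT2b E1 E2 i' j then Rej else Acc, rep_tape B1 B2)"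
      proof -
        have "(RND ^^ (k2 + Suc k1)) (initS True Q2b, rep_tape A1 A2) =
          (RND ^^ k2) ((RND ^^ Suc k1) (initS True Q2b, rep_tape A1 A2))" by (simp only: funpow_add comp_def)
        also have "\<dots> = (RND ^^ k2) (initS True Q2b, rep_tape D1 D2)" using run2 True by simp
        finally show ?thesis using r3 ex by simp
      qed
      moreover have "k2 + Suc k1 \<le> (L1 - i) * ((L2 + 1) * (PB (NN E1 E2) + 1) + 1)"
      proof -
        define P where "P = (L2 + 1) * (PB (NN E1 E2) + 1) + 1"
        have "L1 - i = Suc (L1 - Suc i)" using True by simp
        then have e: "(L1 - i) * P = P + (L1 - Suc i) * P" by simp
        have "k1 + 1 \<le> P" using k1 P_def by simp
        moreover have "k2 \<le> (L1 - Suc i) * P" using k2 P_def by simp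
        ultimately have "k2 + Suc k1 \<le> (L1 - i) * P" using e by linarith
        then show ?thesis by (simp add: P_def)
      qed
      ultimately show ?thesis by blast
    next
      case False
      then have Li: "L1 = Suc i" using Suc.prems(1) by simp
      have ex: "\<not> (\<exists>i'\<in>{i..<L1}. \<exists>j<L2. SAT2b E1 E2 i' j)"
        using \<open>\<not> (\<exists>j<L2. SATj Q2b True E1 E2 (selv L1 i) j)\<close> Li L1 by (auto simp: SAT2b_def)
      have "(RND ^^ Suc k1) (initS True Q2b, rep_tape A1 A2) =
          (if \<exists>i'\<in>{i..<L1}. \<exists>j<L2. SAT2b E1 E2 i' j then Rej else Acc, rep_tape D1 D2)"
        using run2 False ex by simp
      moreover have "Suc k1 \<le> (L1 - i) * ((L2 + 1) * (PB (NN E1 E2) + 1) + 1)" using k1 Li by simp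
      ultimately show ?thesis by blast
    qed
  qed
qed

definition falsified :: "model \<Rightarrow> clause \<Rightarrow> bool" where
  "falsified I c = (\<forall>(v, p)\<in>set c. I v \<noteq> p)"

lemma zip_all: "length S = length E \<Longrightarrow> (\<forall>k\<in>set (zip E S). P (fst k)) = (\<forall>c\<in>set E. P c)"
proof (induction E arbitrary: S)
  case (Cons e E)
  then obtain s S' where "S = s # S'" by (cases S) auto
  then show ?case using Cons by auto
qed simp

lemma zip_selv: "(\<forall>k\<in>set (zip E (selv (length E) j)). snd k \<longrightarrow> P (fst k)) = (j < length E \<longrightarrow> P (E ! j))"
proof -
  have "set (zip E (selv (length E) j)) = {(E ! i, i = j) | i. i < length E}"
    by (auto simp: set_zip selv_def)
  then show ?thesis by auto
qed

lemma smod_act: "act q r \<Longrightarrow> \<not> uni q r \<Longrightarrow> smod q r I k = clause_sat I (fst k)"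
proof -
  assume a: "act q r" "\<not> uni q r"
  obtain cl s where k: "k = (cl, s)" by fastforce
  have "(\<exists>(v, p)\<in>set cl. I v = p) = (\<exists>l\<in>set cl. I (fst l) = snd l)" by (simp add: case_prod_beta)
  then show ?thesis using a unfolding k by (simp add: clause_sat_def lit_sat_def)
qed

lemma smod_uni: "\<not> act q r \<Longrightarrow> uni q r \<Longrightarrow> smod q r I k = (snd k \<longrightarrow> falsified I (fst k))"
proof -
  assume a: "\<not> act q r" "uni q r"
  obtain cl s where k: "k = (cl, s)" by fastforce
  show ?thesis using a unfolding k by (simp add: falsified_def)
qed

lemma sem_1a: "length S1 = length E1 \<Longrightarrow> length S2 = length E2 \<Longrightarrow>
  qsatS Q1a (zip E1 S1) (zip E2 S2) = (\<exists>I. models I E1 \<and> models I E2)"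
  unfolding qsatS_def qmodS_def models_def
  by (simp add: smod_act zip_all[where P="clause_sat _"])

lemma sem_1b: "length So = length E1 \<Longrightarrow> j < length E2 \<Longrightarrow>
  SATj Q1b True E1 E2 So j = (\<exists>I. models I E1 \<and> falsified I (E2 ! j))"
  unfolding SATj_def qsatS_def qmodS_def models_def Let_def
  by (simp add: smod_act smod_uni zip_all[where P="clause_sat _"] zip_selv[where P="falsified _"])

lemma sem_2a: "length So = length E2 \<Longrightarrow> j < length E1 \<Longrightarrow>
  SATj Q2a False E1 E2 So j = (\<exists>I. models I E2 \<and> falsified I (E1 ! j))"
  unfolding SATj_def qsatS_def qmodS_def models_def Let_def
  by (simp add: smod_act smod_uni zip_all[where P="clause_sat _"] zip_selv[where P="falsified _"]) blast

lemma sem_2b: "i < length E1 \<Longrightarrow> j < length E2 \<Longrightarrow>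
  SAT2b E1 E2 i j = (\<exists>I. falsified I (E1 ! i) \<and> falsified I (E2 ! j))"
  unfolding SAT2b_def SATj_def qsatS_def qmodS_def Let_def
  by (simp add: smod_uni zip_selv[where P="falsified _"])

lemma not_models: "(\<not> models I E) = (\<exists>i<length E. falsified I (E ! i))"
proof -
  have c: "(\<not> clause_sat I c) = falsified I c" for c
    by (auto simp: clause_sat_def lit_sat_def falsified_def)
  have "(\<not> models I E) = (\<exists>c\<in>set E. \<not> clause_sat I c)" by (simp add: models_def)
  also have "\<dots> = (\<exists>c\<in>set E. falsified I c)" using c by simp
  also have "\<dots> = (\<exists>i<length E. falsified I (E ! i))" by (metis in_set_conv_nth)
  finally show ?thesis .
qed

lemma seq_equiv_char:
  "seq_equiv [F1, F2] [F1] \<longleftrightarrow>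
    \<not> ((\<exists>I. models I F1 \<and> models I F2) \<and> (\<exists>j<length F2. \<exists>I. models I F1 \<and> falsified I (F2 ! j))) \<and>
    \<not> ((\<exists>j<length F1. \<exists>I. models I F2 \<and> falsified I (F1 ! j)) \<and>
       (\<exists>i<length F1. \<exists>j<length F2. \<exists>I. falsified I (F1 ! i) \<and> falsified I (F2 ! j)))"
proof -
  have "seq_equiv [F1, F2] [F1] \<longleftrightarrow> (\<forall>I J. (models I F1 = models J F1) \<longrightarrow> models I F2 \<or> \<not> models J F2)"
    unfolding seq_equiv_def by (auto simp: leq_form_def)
  also have "\<dots> \<longleftrightarrow> \<not> ((\<exists>J. models J F1 \<and> models J F2) \<and> (\<exists>I. models I F1 \<and> \<not> models I F2)) \<and>
       \<not> ((\<exists>J. \<not> models J F1 \<and> models J F2) \<and> (\<exists>I. \<not> models I F1 \<and> \<not> models I F2))"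
    by blast
  also have "\<dots> \<longleftrightarrow> \<not> ((\<exists>I. models I F1 \<and> models I F2) \<and> (\<exists>j<length F2. \<exists>I. models I F1 \<and> falsified I (F2 ! j))) \<and>
    \<not> ((\<exists>j<length F1. \<exists>I. models I F2 \<and> falsified I (F1 ! j)) \<and>
       (\<exists>i<length F1. \<exists>j<length F2. \<exists>I. falsified I (F1 ! i) \<and> falsified I (F2 ! j)))"
    unfolding not_models by blast
  finally show ?thesis .
qed

definition reach :: "nat \<Rightarrow> (pstate \<times> ust) res \<times> cell list \<Rightarrow> ((pstate \<times> ust) res \<times> cell list \<Rightarrow> bool) \<Rightarrow> bool" where
  "reach B x P = (\<exists>k \<le> B. P ((RND ^^ k) x))"

lemma reach_comp: "reach B1 x P \<Longrightarrow> (\<And>y. P y \<Longrightarrow> reach B2 y Q) \<Longrightarrow> reach (B1 + B2) x Q"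
proof -
  assume 1: "reach B1 x P" and 2: "\<And>y. P y \<Longrightarrow> reach B2 y Q"
  obtain k1 where k1: "k1 \<le> B1" "P ((RND ^^ k1) x)" using 1 by (auto simp: reach_def)
  obtain k2 where k2: "k2 \<le> B2" "Q ((RND ^^ k2) ((RND ^^ k1) x))" using 2[OF k1(2)] by (auto simp: reach_def)
  have "(RND ^^ (k2 + k1)) x = (RND ^^ k2) ((RND ^^ k1) x)" by (simp only: funpow_add comp_def)
  then show ?thesis using k1 k2 unfolding reach_def by (intro exI[of _ "k2 + k1"]) auto
qed

lemma reach_mono: "reach B x P \<Longrightarrow> B \<le> B' \<Longrightarrow> reach B' x P"
  unfolding reach_def using le_trans by blast

lemma reach_refl: "P x \<Longrightarrow> reach B x P"
  by (auto simp: reach_def intro: exI[of _ 0])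

definition TP :: "formula \<Rightarrow> formula \<Rightarrow> (pstate \<times> ust) res \<Rightarrow> (pstate \<times> ust) res \<times> cell list \<Rightarrow> bool" where
  "TP E1 E2 R y = (\<exists>B1 B2. y = (R, rep_tape B1 B2) \<and> ers B1 = E1 \<and> ers B2 = E2)"

lemma reach_final:
  assumes "reach B x (TP E1 E2 R)" "R = Acc \<or> R = Rej"
  shows "fst ((RND ^^ B) x) = R"
proof -
  obtain k B1 B2 where k: "k \<le> B" "(RND ^^ k) x = (R, rep_tape B1 B2)" using assms(1) by (auto simp: reach_def TP_def)
  have "(RND ^^ B) x = (RND ^^ (B - k)) ((RND ^^ k) x)" using k(1)
    by (metis (no_types, lifting) funpow_add le_add_diff_inverse2 o_apply)
  then show ?thesis using k(2) around_halt[OF assms(2)] by (simp add: RND_def)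
qed

lemma length_le_sum_csize: "length E \<le> sum_list (map csize E)"
proof (induction E)
  case (Cons c E)
  have "1 \<le> csize c" by (simp add: csize_def)
  then show ?case using Cons by simp
qed simp

lemma step_Q1b:
  assumes h: "horn E1" "horn E2" and y: "TP E1 E2 (initS True Q1b) y"
  shows "reach ((length E2 + 1) * (PB (NN E1 E2) + 1)) y
     (TP E1 E2 (if \<exists>j<length E2. \<exists>I. models I E1 \<and> falsified I (E2 ! j) then Rej else initS False Q2a))"
proof -
  obtain A1 A2 where y: "y = (initS True Q1b, rep_tape A1 A2)" and e: "ers A1 = E1" "ers A2 = E2" using y by (auto simp: TP_def)
  obtain k B1 B2 where k: "k \<le> (length E2 + 1) * (PB (NN E1 E2) + 1)"
    and r: "(RND ^^ k) (initS True Q1b, rep_tape A1 A2) =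
      (if \<exists>j<length E2. SATj Q1b True E1 E2 (map csel A1) j then Rej else initS False Q2a, rep_tape B1 B2)"
    and eB: "ers B1 = E1" "ers B2 = E2"
    using loop_init[where q=Q1b and rt=True and SS=Rej and SE="initS False Q2a", OF _ _ _ _ h _ e, of "length E2" "map csel A1"]
    by (auto simp: nextS_def)
  have "length (map csel A1) = length E1" using e by (simp add: length_ers[symmetric])
  then have "\<forall>j<length E2. SATj Q1b True E1 E2 (map csel A1) j = (\<exists>I. models I E1 \<and> falsified I (E2 ! j))"
    using sem_1b by blast
  then have "(\<exists>j<length E2. SATj Q1b True E1 E2 (map csel A1) j) = (\<exists>j<length E2. \<exists>I. models I E1 \<and> falsified I (E2 ! j))"
    by blast
  then have "(RND ^^ k) y = (if \<exists>j<length E2. \<exists>I. models I E1 \<and> falsified I (E2 ! j) then Rej else initS False Q2a, rep_tape B1 B2)"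
    using r y by simp
  then have "TP E1 E2 (if \<exists>j<length E2. \<exists>I. models I E1 \<and> falsified I (E2 ! j) then Rej else initS False Q2a) ((RND ^^ k) y)"
    unfolding TP_def using eB by blast
  then show ?thesis using k unfolding reach_def by blast
qed

lemma step_Q2a:
  assumes h: "horn E1" "horn E2" and y: "TP E1 E2 (initS False Q2a) y"
  shows "reach ((length E1 + 1) * (PB (NN E1 E2) + 1)) y
     (TP E1 E2 (if \<exists>j<length E1. \<exists>I. models I E2 \<and> falsified I (E1 ! j) then initS False Q2b else Acc))"
proof -
  obtain A1 A2 where y: "y = (initS False Q2a, rep_tape A1 A2)" and e: "ers A1 = E1" "ers A2 = E2" using y by (auto simp: TP_def)
  obtain k B1 B2 where k: "k \<le> (length E1 + 1) * (PB (NN E1 E2) + 1)"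
    and r: "(RND ^^ k) (initS False Q2a, rep_tape A1 A2) =
      (if \<exists>j<length E1. SATj Q2a False E1 E2 (map csel A2) j then initS False Q2b else Acc, rep_tape B1 B2)"
    and eB: "ers B1 = E1" "ers B2 = E2"
    using loop_init[where q=Q2a and rt=False and SS="initS False Q2b" and SE=Acc, OF _ _ _ _ h _ e, of "length E1" "map csel A2"]
    by (auto simp: nextS_def)
  have "length (map csel A2) = length E2" using e by (simp add: length_ers[symmetric])
  then have "\<forall>j<length E1. SATj Q2a False E1 E2 (map csel A2) j = (\<exists>I. models I E2 \<and> falsified I (E1 ! j))"
    using sem_2a by blast
  then have "(\<exists>j<length E1. SATj Q2a False E1 E2 (map csel A2) j) = (\<exists>j<length E1. \<exists>I. models I E2 \<and> falsified I (E1 ! j))"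
    by blast
  then have "(RND ^^ k) y = (if \<exists>j<length E1. \<exists>I. models I E2 \<and> falsified I (E1 ! j) then initS False Q2b else Acc, rep_tape B1 B2)"
    using r y by simp
  then have "TP E1 E2 (if \<exists>j<length E1. \<exists>I. models I E2 \<and> falsified I (E1 ! j) then initS False Q2b else Acc) ((RND ^^ k) y)"
    unfolding TP_def using eB by blast
  then show ?thesis using k unfolding reach_def by blast
qed

lemma step_Q2b:
  assumes h: "horn E1" "horn E2" and y: "TP E1 E2 (initS False Q2b) y"
  shows "reach (1 + length E1 * ((length E2 + 1) * (PB (NN E1 E2) + 1) + 1)) y
     (\<lambda>z. fst z = (if \<exists>i<length E1. \<exists>j<length E2. \<exists>I. falsified I (E1 ! i) \<and> falsified I (E2 ! j) then Rej else Acc))"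
proof -
  obtain A1 A2 where y: "y = (initS False Q2b, rep_tape A1 A2)" and e: "ers A1 = E1" "ers A2 = E2" using y by (auto simp: TP_def)
  have lenS: "length (map csel A1) = length E1" using e by (simp add: length_ers[symmetric])
  obtain D1 D2 where r1: "RND (Cont (p0, USel False False Q2b False True), rep_tape A1 A2) =
      (if True \<in> set (sel_run False True (map csel A1)) then onfound False Q2b else exhausted False Q2b, rep_tape D1 D2)"
    and eD: "ers D1 = E1" "ers D2 = E2" and sD: "map csel D1 = sel_run False True (map csel A1)"
    using sel_step[OF e h _ _ lenS, where rt=False and isN=False and pv=True and q=Q2b and q'=Q2b and So="map csel A2"] by auto
  have ss: "sel_run False True (map csel A1) = selv (length E1) 0" using sel_run_init lenS by metis
  let ?R = "if \<exists>i<length E1. \<exists>j<length E2. \<exists>I. falsified I (E1 ! i) \<and> falsified I (E2 ! j) then Rej else Acc"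
  have sem: "(\<exists>i'\<in>{0..<length E1}. \<exists>j<length E2. SAT2b E1 E2 i' j) =
      (\<exists>i<length E1. \<exists>j<length E2. \<exists>I. falsified I (E1 ! i) \<and> falsified I (E2 ! j))"
  proof -
    have "\<forall>i<length E1. \<forall>j<length E2. SAT2b E1 E2 i j = (\<exists>I. falsified I (E1 ! i) \<and> falsified I (E2 ! j))"
      using sem_2b by blast
    show ?thesis
    proof
      assume "\<exists>i'\<in>{0..<length E1}. \<exists>j<length E2. SAT2b E1 E2 i' j"
      then obtain i j where "i < length E1" "j < length E2" "SAT2b E1 E2 i j" by auto
      then show "\<exists>i<length E1. \<exists>j<length E2. \<exists>I. falsified I (E1 ! i) \<and> falsified I (E2 ! j)"
        using \<open>\<forall>i<length E1. _\<close> by blast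
    next
      assume "\<exists>i<length E1. \<exists>j<length E2. \<exists>I. falsified I (E1 ! i) \<and> falsified I (E2 ! j)"
      then obtain i j where "i < length E1" "j < length E2" "\<exists>I. falsified I (E1 ! i) \<and> falsified I (E2 ! j)" by blast
      then have "SAT2b E1 E2 i j" using \<open>\<forall>i<length E1. _\<close> by blast
      then show "\<exists>i'\<in>{0..<length E1}. \<exists>j<length E2. SAT2b E1 E2 i' j"
        using \<open>i < length E1\<close> \<open>j < length E2\<close> by auto
    qed
  qed
  show ?thesis
  proof (cases "0 < length E1")
    case True
    have r1': "RND y = (initS True Q2b, rep_tape D1 D2)" using r1 ss True y by (simp add: initS_def True_selv)
    obtain k B1 B2 where k: "k \<le> (length E1 - 0) * ((length E2 + 1) * (PB (NN E1 E2) + 1) + 1)"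
      and r2: "(RND ^^ k) (initS True Q2b, rep_tape D1 D2) =
        (if \<exists>i'\<in>{0..<length E1}. \<exists>j<length E2. SAT2b E1 E2 i' j then Rej else Acc, rep_tape B1 B2)"
      using outer_loop[OF h refl refl True eD] sD ss by auto
    have "(RND ^^ (k + 1)) y = (RND ^^ k) (RND y)" using funpow_Suc_r[where f=RND and n=k] by simp
    then have "(RND ^^ (k + 1)) y = (?R, rep_tape B1 B2)" using r1' r2 sem by simp
    moreover have "k + 1 \<le> 1 + length E1 * ((length E2 + 1) * (PB (NN E1 E2) + 1) + 1)" using k by simp
    ultimately show ?thesis unfolding reach_def by (intro exI[of _ "k + 1"]) auto
  next
    case False
    have "RND y = (?R, rep_tape D1 D2)" using r1 ss False y by (simp add: initS_def True_selv)
    then have "(RND ^^ 1) y = (?R, rep_tape D1 D2)" by simp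
    then show ?thesis unfolding reach_def by (intro exI[of _ 1]) auto
  qed
qed

definition TB :: "nat \<Rightarrow> nat" where
  "TB N = PB N + (N + 1) * (PB N + 1) + (N + 1) * (PB N + 1) + (1 + N * ((N + 1) * (PB N + 1) + 1))"

lemma e1: "TB N * (2 * N + 2) = 4*N^5 + 22*N^4 + 52*N^3 + 66*N^2 + 44*N + 12"
  unfolding TB_def PB_def by algebra

lemma e2: "30 * (N + 1) ^ 5 = 30*N^5 + 150*N^4 + 300*N^3 + 300*N^2 + 150*N + (30::nat)"
  by algebra

lemma TB_bound: "TB N * (2 * N + 2) \<le> 30 * (N + 1) ^ 5"
  unfolding e1 e2 by linarith

definition initL :: "nat \<times> bool \<Rightarrow> alit" where
  "initL vp = \<lparr>lv = fst vp, lp = snd vp, lj = 0, lt = False, lc = False\<rparr>"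
definition initC :: "clause \<Rightarrow> acl" where
  "initC c = \<lparr>lits = map initL c, csel = False, cs = None\<rparr>"
definition initA :: "formula \<Rightarrow> acl list" where
  "initA F = map initC F"

lemma ers_initA: "ers (initA F) = F"
  by (simp add: ers_def initA_def initC_def initL_def comp_def)

lemma enc_plain: "enc_cell (Cell b False False False False None) = b"
  by (simp add: enc_cell_def smode_nat_def)

lemma enc_bitcells0: "map enc_cell (bitcells 0 ss) = ss"
  by (induction ss) (auto simp: enc_plain)

lemma enc_rep_lits: "map enc_cell (rep_lits (False, False) (map initL c) False None) = enc_clause c"
proof (induction c)
  case Nil then show ?case by (simp add: enc_clause_def enc_plain)
next
  case (Cons l c)
  then show ?case by (simp add: enc_clause_def enc_lit_def initL_def enc_plain enc_bitcells0)
qed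

lemma enc_initA: "map enc_cell (rep_tape (initA F1) (initA F2)) = enc_pair F1 F2"
proof -
  have "map enc_cell (concat (map rep_clause (initA F))) = concat (map enc_clause F)" for F
    by (induction F) (auto simp: initA_def rep_clause_def initC_def enc_rep_lits)
  then show ?thesis by (simp add: rep_tape_def rep_form_def enc_pair_def enc_formula_def six_def enc_plain)
qed

lemma PI_init: "horn F1 \<Longrightarrow> horn F2 \<Longrightarrow> PI q {} (initA F1) (initA F2)"
proof -
  assume h: "horn F1" "horn F2"
  have "\<forall>l\<in>set (alls (initA F1) @ alls (initA F2)). \<not> lt l \<and> lj l = 0"
    by (auto simp: alls_def initA_def initC_def initL_def)
  moreover have "horn (ers (initA F1))" "horn (ers (initA F2))" using h by (simp_all add: ers_initA)
  ultimately show ?thesis by (rule PI_clean)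
qed

lemma vc_bitcells: "set ss \<subseteq> {1, 2} \<Longrightarrow> \<forall>x\<in>set (bitcells j ss). vc x"
  by (induction ss arbitrary: j) (auto simp: vc_def)

lemma vc_rep_lits: "\<forall>x\<in>set (rep_lits pf ls sel s). vc x"
proof (induction ls arbitrary: pf)
  case (Cons l ls)
  have "\<forall>x\<in>set (bitcells (lj l) (bits (lv l))). vc x" by (rule vc_bitcells[OF bits_set])
  then show ?case using Cons by (auto simp: vc_def)
qed (simp add: vc_def)

lemma vc_rep_tape: "\<forall>x\<in>set (rep_tape A1 A2). vc x"
  using vc_rep_lits by (auto simp: rep_tape_def rep_form_def rep_clause_def six_def vc_def)

lemma reach_fst:
  assumes "reach B x (\<lambda>z. fst z = R)" "R = Acc \<or> R = Rej"
  shows "fst ((RND ^^ B) x) = R"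
proof -
  obtain k where k: "k \<le> B" "fst ((RND ^^ k) x) = R" using assms(1) by (auto simp: reach_def)
  obtain t where t: "(RND ^^ k) x = (R, t)" using k(2) by (metis prod.collapse)
  have "(RND ^^ B) x = (RND ^^ (B - k)) ((RND ^^ k) x)" using k(1)
    by (metis (no_types, lifting) funpow_add le_add_diff_inverse2 o_apply)
  then show ?thesis using t around_halt[OF assms(2)] by (simp add: RND_def)
qed

lemma main_rounds:
  assumes h: "horn F1" "horn F2"
  shows "fst ((RND ^^ TB (NN F1 F2)) (Cont (p0, find0 Q1a), rep_tape (initA F1) (initA F2))) =
    (if seq_equiv [F1, F2] [F1] then Acc else Rej)"
proof -
  let ?N = "NN F1 F2"
  let ?x0 = "(Cont (p0, find0 Q1a), rep_tape (initA F1) (initA F2))"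
  define s1a where "s1a = (\<exists>I. models I F1 \<and> models I F2)"
  define A1b where "A1b = (\<exists>j<length F2. \<exists>I. models I F1 \<and> falsified I (F2 ! j))"
  define A2a where "A2a = (\<exists>j<length F1. \<exists>I. models I F2 \<and> falsified I (F1 ! j))"
  define A2b where "A2b = (\<exists>i<length F1. \<exists>j<length F2. \<exists>I. falsified I (F1 ! i) \<and> falsified I (F2 ! j))"
  define R1 where "R1 = (if s1a \<and> A1b then Rej else initS False Q2a)"
  define R2 where "R2 = (if s1a \<and> A1b then Rej else if A2a then initS False Q2b else Acc)"
  define R3 :: "(pstate \<times> ust) res" where "R3 = (if s1a \<and> A1b then Rej else if A2a \<and> A2b then Rej else Acc)"
  have L1: "length F1 \<le> ?N" and L2: "length F2 \<le> ?N"
    using length_le_sum_csize[of F1] length_le_sum_csize[of F2] by (auto simp: NN_def)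
  have N0: "length (rep_tape (initA F1) (initA F2)) = ?N" using NN_len ers_initA by blast
  have st1: "reach (PB ?N) ?x0 (TP F1 F2 (after Q1a s1a))"
  proof -
    obtain k B1 B2 where k: "k \<le> PB ?N" and r: "(RND ^^ k) ?x0 = (after Q1a (qsatS Q1a (map skel (initA F1)) (map skel (initA F2))), rep_tape B1 B2)"
      and sk: "map skel B1 = map skel (initA F1)" "map skel B2 = map skel (initA F2)"
      using propagate0[OF PI_init[OF h, of Q1a], unfolded N0] by blast
    have q: "qsatS Q1a (map skel (initA F1)) (map skel (initA F2)) = s1a"
      unfolding skel_zip s1a_def ers_initA by (rule sem_1a) (simp_all add: initA_def length_ers[symmetric, of "initA _", unfolded ers_initA])
    have "ers B1 = F1" "ers B2 = F2" using skel_eqD[OF sk(1)] skel_eqD[OF sk(2)] ers_initA by auto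
    then show ?thesis using k r q unfolding reach_def TP_def by blast
  qed
  have st2: "reach ((?N + 1) * (PB ?N + 1)) y (TP F1 F2 R1)" if "TP F1 F2 (after Q1a s1a) y" for y
  proof (cases s1a)
    case True
    then have tp: "TP F1 F2 (initS True Q1b) y" using that by simp
    have R1e: "R1 = (if A1b then Rej else initS False Q2a)" using True unfolding R1_def by auto
    from step_Q1b[OF h tp] have "reach ((length F2 + 1) * (PB ?N + 1)) y (TP F1 F2 R1)"
      unfolding R1e A1b_def .
    moreover have "(length F2 + 1) * (PB ?N + 1) \<le> (?N + 1) * (PB ?N + 1)" by (rule mult_le_mono1) (use L2 in simp)
    ultimately show ?thesis by (rule reach_mono)
  next
    case False
    then show ?thesis using that by (intro reach_refl) (simp add: R1_def)
  qed
  have st3: "reach ((?N + 1) * (PB ?N + 1)) y (TP F1 F2 R2)" if "TP F1 F2 R1 y" for y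
  proof (cases "s1a \<and> A1b")
    case True
    then show ?thesis using that by (intro reach_refl) (simp add: R1_def R2_def)
  next
    case False
    then have "R1 = initS False Q2a" unfolding R1_def by (simp only: if_False)
    then have tp: "TP F1 F2 (initS False Q2a) y" using that by simp
    have R2e: "R2 = (if A2a then initS False Q2b else Acc)" using False unfolding R2_def by (simp only: if_False)
    from step_Q2a[OF h tp] have "reach ((length F1 + 1) * (PB ?N + 1)) y (TP F1 F2 R2)"
      unfolding R2e A2a_def .
    moreover have "(length F1 + 1) * (PB ?N + 1) \<le> (?N + 1) * (PB ?N + 1)" by (rule mult_le_mono1) (use L1 in simp)
    ultimately show ?thesis by (rule reach_mono)
  qed
  have st4: "reach (1 + ?N * ((?N + 1) * (PB ?N + 1) + 1)) y (\<lambda>z. fst z = R3)" if "TP F1 F2 R2 y" for y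
  proof (cases "\<not> (s1a \<and> A1b) \<and> A2a")
    case False
    then show ?thesis using that by (intro reach_refl) (auto simp: R2_def R3_def TP_def)
  next
    case True
    then have "R2 = initS False Q2b" unfolding R2_def by auto
    then have tp: "TP F1 F2 (initS False Q2b) y" using that by simp
    have R3e: "R3 = (if A2b then Rej else Acc)" using True unfolding R3_def by auto
    from step_Q2b[OF h tp] have "reach (1 + length F1 * ((length F2 + 1) * (PB ?N + 1) + 1)) y (\<lambda>z. fst z = R3)"
      unfolding R3e A2b_def .
    then show ?thesis
    proof (rule reach_mono)
      have "(length F2 + 1) * (PB ?N + 1) \<le> (?N + 1) * (PB ?N + 1)" by (rule mult_le_mono1) (use L2 in simp)
      then have "(length F2 + 1) * (PB ?N + 1) + 1 \<le> (?N + 1) * (PB ?N + 1) + 1" by simp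
      then have "length F1 * ((length F2 + 1) * (PB ?N + 1) + 1) \<le> ?N * ((?N + 1) * (PB ?N + 1) + 1)"
        using L1 by (rule mult_le_mono[rotated])
      then show "1 + length F1 * ((length F2 + 1) * (PB ?N + 1) + 1) \<le> 1 + ?N * ((?N + 1) * (PB ?N + 1) + 1)"
        by simp
    qed
  qed
  have "reach (PB ?N + (?N + 1) * (PB ?N + 1) + (?N + 1) * (PB ?N + 1) + (1 + ?N * ((?N + 1) * (PB ?N + 1) + 1))) ?x0 (\<lambda>z. fst z = R3)"
    by (rule reach_comp[OF reach_comp[OF reach_comp[OF st1 st2] st3] st4])
  then have "fst ((RND ^^ TB ?N) ?x0) = R3" unfolding TB_def by (rule reach_fst) (simp add: R3_def)
  moreover have "R3 = (if seq_equiv [F1, F2] [F1] then Acc else Rej)"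
    unfolding R3_def seq_equiv_char s1a_def A1b_def A2a_def A2b_def by auto
  ultimately show ?thesis by simp
qed

theorem theorem10:
  shows "\<exists>M c k. wf_tm M \<and>
    (\<forall>F1 F2. horn F1 \<longrightarrow> horn F2 \<longrightarrow>
       tm_state (tm_run M (c * (length (enc_pair F1 F2) + 1) ^ k)
                   (tm_init (enc_pair F1 F2)))
       = (if seq_equiv [F1, F2] [F1] then 1 else 2))"
proof (intro exI conjI allI impI)
  let ?s0 = "(p0, find0 Q1a)"
  let ?M = "mk_tm DD FIN ?s0"
  show "wf_tm ?M" by (rule mk_tm_wf) simp
  fix F1 F2 :: formula
  assume h: "horn F1" "horn F2"
  let ?cells = "rep_tape (initA F1) (initA F2)"
  obtain x xs where cx: "?cells = x # xs" by (cases ?cells) (auto simp: rep_tape_def rep_form_def)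
  have enc: "enc_pair F1 F2 = map enc_cell (x # xs)" using enc_initA cx by metis
  have len: "length (x # xs) = NN F1 F2" using NN_len[OF ers_initA ers_initA, of F1 F2] cx by simp
  have N: "length (enc_pair F1 F2) = NN F1 F2" using len enc by simp
  have init: "tm_init (enc_pair F1 F2) = (4 * idxR ?s0 ?s0, replicate 0 0, enc_cell x, map enc_cell xs @ replicate 0 0)"
    by (simp add: enc tm_init_def idxR_def)
  have pres: "\<forall>s x. cb (snd (DD s x)) = cb x" by (simp add: DD_def gd_cb)
  have v: "\<forall>z\<in>set (x # xs). vc z" using vc_rep_tape cx by metis
  obtain r zs where rz: "(around DD FIN ^^ TB (NN F1 F2)) (Cont ?s0, x # xs) = (r, zs)" by fastforce
  have r: "r = (if seq_equiv [F1, F2] [F1] then Acc else Rej)"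
    using main_rounds[OF h] rz cx by (simp add: RND_def)
  have T: "TB (NN F1 F2) * (2 * length (x # xs) + 2) \<le> 30 * (length (enc_pair F1 F2) + 1) ^ 5"
    using TB_bound[of "NN F1 F2"] len N by simp
  have "tm_state (tm_run ?M (30 * (length (enc_pair F1 F2) + 1) ^ 5)
      (4 * idxR ?s0 ?s0, replicate 0 0, enc_cell x, map enc_cell xs @ replicate 0 0)) = (if r = Acc then 1 else 2)"
    using rounds[where s0="(p0, find0 Q1a)" and a=0 and b=0, OF pres v rz _ T] r by auto
  then show "tm_state (tm_run ?M (30 * (length (enc_pair F1 F2) + 1) ^ 5) (tm_init (enc_pair F1 F2)))
      = (if seq_equiv [F1, F2] [F1] then 1 else 2)"
    using r init by auto
qed

end
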